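(* Let $\zeta=e^{2\pi i/n}$. The matrices $\mathcal{S}=(\mathcal{S}_{\lambda\mu})$ and $\mathcal{T}=(\mathcal{T}_{\lambda\mu})$ indexed by $\lambda,\mu\in\mathcal{A}_{k,n}$, with $$\mathcal{S}_{\lambda\mu}=\sqrt{\frac{|S_\lambda|}{|S_\mu|}}\frac{m_\lambda(\zeta^\mu)}{n^{k/2}},\qquad \mathcal{T}_{\lambda\mu}=\delta_{\lambda\mu}\,\zeta^{-\frac{kn(n-1)}{24}}\prod_{i=1}^k\zeta^{\frac{\lambda_i(n-\lambda_i)}{2}},$$ satisfy $(\mathcal{S}\mathcal{T})^3=\mathcal{S}^2=\mathcal{C}$ with $\mathcal{C}_{\lambda\mu}=\delta_{\lambda\mu^*}$, $\mathcal{C}^2=\mathrm{Id}$, $\mathcal{S}^{-1}=\mathcal{S}^*$, $\mathcal{S}^*=\mathcal{C}\mathcal{S}=\mathcal{S}\mathcal{C}$ and $\mathcal{C}\mathcal{T}\mathcal{C}=\mathcal{T}$; in particular they yield a representation of (the double cover of) the modular group.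
   Context: Fix $k,n\ge1$. $\mathcal{A}_{k,n}$ is the set of integer vectors $(\lambda_1,\dots,\lambda_k)$ with $n\ge\lambda_1\ge\cdots\ge\lambda_k>0$, regarded as functions $\mathbb{Z}\to\mathbb{Z}$ via $\lambda_{i+k}=\lambda_i-n$. $m_\lambda(\zeta^\mu)$ is the monomial symmetric polynomial of $(\lambda_1,\dots,\lambda_k)$ evaluated at $x_j=\zeta^{\mu_j}$; $|S_\lambda|=\prod_i m_i(\lambda)!$ where $m_i(\lambda)$ is the multiplicity of the part $i$. For rational $q$, $\zeta^q:=e^{2\pi iq/n}$. $\mathcal{S}^*$ is the conjugate transpose. For $\lambda\in\mathcal{A}_{k,n}$, $\lambda^*\in\mathcal{A}_{k,n}$ is defined as follows: let $\rho$ be the function $\mathbb{Z}\to\mathbb{Z}$ with $(\rho_1,\dots,\rho_k)=(n-\lambda_k,\dots,n-\lambda_1)$ and $\rho_{i+k}=\rho_i-n$; then $\lambda^*_i=\rho_{i-m}$ with $m=m_n(\lambda)$ (the image of $\rho$ under $\tau^{m}$, $\tau(j)=j-1$). *)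

theory Defs
  imports "HOL-Analysis.Analysis" "HOL-Library.Multiset"
begin

text \<open>Partitions in A_{k,n}: integer lists (lambda_1,...,lambda_k), weakly decreasing,
  with n >= lambda_1 and lambda_k > 0. List position j (0-based) holds lambda_{j+1}.\<close>
definition Akn :: "nat \<Rightarrow> nat \<Rightarrow> int list set" where
  "Akn k n = {l. length l = k \<and> sorted_wrt (\<ge>) l \<and> (\<forall>x\<in>set l. 0 < x \<and> x \<le> int n)}"

definition zeta :: "nat \<Rightarrow> real \<Rightarrow> complex" where
  "zeta n q = exp (2 * of_real pi * \<i> * of_real q / of_nat n)"

text \<open>Extension of a list to a function Z -> Z, 1-indexed: f_{i+k} = f_i - n.\<close>
definition ext :: "nat \<Rightarrow> int list \<Rightarrow> int \<Rightarrow> int" where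
  "ext n l i = l ! nat ((i - 1) mod int (length l)) - int n * ((i - 1) div int (length l))"

definition pstar :: "nat \<Rightarrow> int list \<Rightarrow> int list" where
  "pstar n l = (let rho = map (\<lambda>x. int n - x) (rev l);
                    m = int (count (mset l) (int n))
                in map (\<lambda>i. ext n rho (int i - m)) [1..<length l + 1])"

definition monomial_sym :: "int list \<Rightarrow> (nat \<Rightarrow> complex) \<Rightarrow> complex" where
  "monomial_sym l x = (\<Sum>\<alpha>\<in>{\<alpha>. mset \<alpha> = mset l}. \<Prod>j<length l. x j ^ nat (\<alpha> ! j))"

definition stab_card :: "int list \<Rightarrow> nat" where
  "stab_card l = (\<Prod>i\<in>set l. fact (count (mset l) i))"

definition Smat :: "nat \<Rightarrow> nat \<Rightarrow> int list \<Rightarrow> int list \<Rightarrow> complex" where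
  "Smat k n l \<mu> = of_real (sqrt (real (stab_card l) / real (stab_card \<mu>)))
      * monomial_sym l (\<lambda>j. zeta n (of_int (\<mu> ! j)))
      / of_real (sqrt (real n) ^ k)"

definition Tmat :: "nat \<Rightarrow> nat \<Rightarrow> int list \<Rightarrow> int list \<Rightarrow> complex" where
  "Tmat k n l \<mu> = (if l = \<mu> then
      zeta n (- (real k * real n * (real n - 1) / 24))
      * (\<Prod>i<k. zeta n (of_int (l ! i * (int n - l ! i)) / 2))
    else 0)"

definition Cmat :: "nat \<Rightarrow> int list \<Rightarrow> int list \<Rightarrow> complex" where
  "Cmat n l \<mu> = (if l = pstar n \<mu> then 1 else 0)"

definition Idmat :: "int list \<Rightarrow> int list \<Rightarrow> complex" where
  "Idmat l \<mu> = (if l = \<mu> then 1 else 0)"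

definition ctrans :: "('a \<Rightarrow> 'a \<Rightarrow> complex) \<Rightarrow> 'a \<Rightarrow> 'a \<Rightarrow> complex" where
  "ctrans M a b = cnj (M b a)"

definition mmult :: "'a set \<Rightarrow> ('a \<Rightarrow> 'a \<Rightarrow> complex) \<Rightarrow> ('a \<Rightarrow> 'a \<Rightarrow> complex) \<Rightarrow> 'a \<Rightarrow> 'a \<Rightarrow> complex" where
  "mmult I M N a b = (\<Sum>c\<in>I. M a c * N c b)"

definition meq :: "'a set \<Rightarrow> ('a \<Rightarrow> 'a \<Rightarrow> complex) \<Rightarrow> ('a \<Rightarrow> 'a \<Rightarrow> complex) \<Rightarrow> bool" where
  "meq I M N \<longleftrightarrow> (\<forall>a\<in>I. \<forall>b\<in>I. M a b = N a b)"

end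

theory Submission
  imports Defs "HOL-Complex_Analysis.Complex_Analysis" "HOL-Real_Asymp.Real_Asymp" "HOL-Combinatorics.Multiset_Permutations"
begin

definition gphi :: "nat \<Rightarrow> complex \<Rightarrow> complex" where
  "gphi N z = exp (of_real pi * \<i> * z * (of_nat N - z) / of_nat N)"
definition gE :: "complex \<Rightarrow> complex" where
  "gE z = exp (2 * of_real pi * \<i> * z)"
definition gh :: "nat \<Rightarrow> complex \<Rightarrow> complex" where
  "gh N z = gphi N z / (gE z - 1)"
definition gpsi :: "nat \<Rightarrow> complex \<Rightarrow> complex" where
  "gpsi N z = exp (- of_real pi * \<i> * z^2 / of_nat N - of_real pi * \<i> * z)"

definition gv :: complex where "gv = 1 - \<i>"
definition gV :: "real \<Rightarrow> real \<Rightarrow> complex" where "gV a b = of_real a + of_real b * gv"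
definition gx0 :: real where "gx0 = - 1/4"

definition gpar :: "nat \<Rightarrow> real \<Rightarrow> real \<Rightarrow> complex" where
  "gpar N R = linepath (gV gx0 R) (gV (gx0 + N) R) +++
              linepath (gV (gx0 + N) R) (gV (gx0 + N) (-R)) +++
              linepath (gV (gx0 + N) (-R)) (gV gx0 (-R)) +++
              linepath (gV gx0 (-R)) (gV gx0 R)"

definition gl :: "complex \<Rightarrow> real" where "gl z = inner (1 + \<i>) z"

lemma gl_eq: "gl z = Re z + Im z" by (simp add: gl_def inner_complex_def)

lemma gE_eq_1_iff: "gE z = 1 \<longleftrightarrow> z \<in> \<int>"
proof -
  have "gE z = 1 \<longleftrightarrow> Im z = 0 \<and> (\<exists>n::int. Re z = of_int n)"
    unfolding gE_def exp_eq_1 by (auto simp: algebra_simps)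
  also have "\<dots> \<longleftrightarrow> z \<in> \<int>"
  proof
    assume "Im z = 0 \<and> (\<exists>n::int. Re z = of_int n)"
    then obtain n::int where "Im z = 0" "Re z = of_int n" by blast
    then have "z = of_int n" by (simp add: complex_eq_iff)
    then show "z \<in> \<int>" by simp
  next
    assume "z \<in> \<int>"
    then obtain n::int where "z = of_int n" by (auto elim: Ints_cases)
    then show "Im z = 0 \<and> (\<exists>n::int. Re z = of_int n)" by auto
  qed
  finally show ?thesis .
qed

lemma seg_param:
  assumes "z \<in> closed_segment (gV a1 b1) (gV a2 b2)"
  shows "\<exists>u. 0 \<le> u \<and> u \<le> 1 \<and> Re z = ((1-u)*a1 + u*a2) + ((1-u)*b1+u*b2) \<and> Im z = -((1-u)*b1 + u*b2)"
proof -
  from assms obtain u where u: "0 \<le> u" "u \<le> 1" "z = (1 - u) *\<^sub>R gV a1 b1 + u *\<^sub>R gV a2 b2"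
    by (auto simp: in_segment)
  have "Re z = ((1-u)*a1 + u*a2) + ((1-u)*b1+u*b2)" "Im z = -((1-u)*b1 + u*b2)"
    unfolding u(3) by (simp_all add: gV_def gv_def scaleR_conv_of_real algebra_simps)
  then show ?thesis using u by blast
qed

lemma seg_im:
  "Im ((gV a2 b2 - gV a1 b1) * cnj (gV a2 b2 - of_real c)) = (a2-a1)*b2 - (b2-b1)*(a2-c)"
  by (simp add: gV_def gv_def algebra_simps)

lemma gpar_image:
  assumes "z \<in> path_image (gpar N R)" "0 \<le> R"
  shows "\<exists>\<alpha> \<beta>. gx0 \<le> \<alpha> \<and> \<alpha> \<le> gx0 + N \<and> -R \<le> \<beta> \<and> \<beta> \<le> R \<and> Re z = \<alpha> + \<beta> \<and> Im z = -\<beta>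
     \<and> (\<alpha> = gx0 \<or> \<alpha> = gx0 + N \<or> \<beta> = R \<or> \<beta> = -R)"
proof -
  have "z \<in> closed_segment (gV gx0 R) (gV (gx0 + N) R) \<or> z \<in> closed_segment (gV (gx0 + N) R) (gV (gx0 + N) (-R))
     \<or> z \<in> closed_segment (gV (gx0 + N) (-R)) (gV gx0 (-R)) \<or> z \<in> closed_segment (gV gx0 (-R)) (gV gx0 R)"
    using assms by (simp add: gpar_def path_image_join)
  then show ?thesis
  proof (elim disjE)
    assume "z \<in> closed_segment (gV gx0 R) (gV (gx0 + N) R)"
    then obtain u where u: "0 \<le> u" "u \<le> 1" "Re z = ((1-u)*gx0 + u*(gx0+N)) + ((1-u)*R+u*R)" "Im z = -((1-u)*R + u*R)"
      using seg_param by blast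
    have "u * real N \<le> real N" "u * R \<le> R" using u assms(2) mult_right_mono[of u 1 "real N"] mult_right_mono[of u 1 R] by auto
    then show ?thesis using u assms(2) by (rule_tac exI[of _ "gx0 + u * N"], rule_tac exI[of _ "R"]) (auto simp: algebra_simps)
  next
    assume "z \<in> closed_segment (gV (gx0 + N) R) (gV (gx0 + N) (-R))"
    then obtain u where u: "0 \<le> u" "u \<le> 1" "Re z = ((1-u)*(gx0+N) + u*(gx0+N)) + ((1-u)*R+u*(-R))" "Im z = -((1-u)*R + u*(-R))"
      using seg_param by blast
    have "u * real N \<le> real N" "u * R \<le> R" using u assms(2) mult_right_mono[of u 1 "real N"] mult_right_mono[of u 1 R] by auto
    then show ?thesis using u assms(2) by (rule_tac exI[of _ "gx0 + N"], rule_tac exI[of _ "R - 2*u*R"]) (auto simp: algebra_simps)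
  next
    assume "z \<in> closed_segment (gV (gx0 + N) (-R)) (gV gx0 (-R))"
    then obtain u where u: "0 \<le> u" "u \<le> 1" "Re z = ((1-u)*(gx0+N) + u*gx0) + ((1-u)*(-R)+u*(-R))" "Im z = -((1-u)*(-R) + u*(-R))"
      using seg_param by blast
    have "u * real N \<le> real N" "u * R \<le> R" using u assms(2) mult_right_mono[of u 1 "real N"] mult_right_mono[of u 1 R] by auto
    then show ?thesis using u assms(2) by (rule_tac exI[of _ "gx0 + N - u * N"], rule_tac exI[of _ "-R"]) (auto simp: algebra_simps)
  next
    assume "z \<in> closed_segment (gV gx0 (-R)) (gV gx0 R)"
    then obtain u where u: "0 \<le> u" "u \<le> 1" "Re z = ((1-u)*gx0 + u*gx0) + ((1-u)*(-R)+u*R)" "Im z = -((1-u)*(-R) + u*R)"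
      using seg_param by blast
    have "u * real N \<le> real N" "u * R \<le> R" using u assms(2) mult_right_mono[of u 1 "real N"] mult_right_mono[of u 1 R] by auto
    then show ?thesis using u assms(2) by (rule_tac exI[of _ "gx0"], rule_tac exI[of _ "2*u*R - R"]) (auto simp: algebra_simps)
  qed
qed


lemma gpar_strip:
  assumes "z \<in> path_image (gpar N R)" "0 \<le> R"
  shows "gx0 \<le> gl z \<and> gl z \<le> gx0 + N"
  using gpar_image[OF assms] by (auto simp: gl_eq)

lemma gpar_notint:
  assumes "z \<in> path_image (gpar N R)" "0 < R"
  shows "z \<notin> \<int>"
proof
  assume "z \<in> \<int>"
  then obtain m::int where m: "z = of_int m" by (auto elim: Ints_cases)
  obtain \<alpha> \<beta> where ab: "gx0 \<le> \<alpha>" "\<alpha> \<le> gx0 + N" "-R \<le> \<beta>" "\<beta> \<le> R" "Re z = \<alpha> + \<beta>" "Im z = -\<beta>"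
     "\<alpha> = gx0 \<or> \<alpha> = gx0 + N \<or> \<beta> = R \<or> \<beta> = -R"
    using gpar_image[OF assms(1)] assms(2) by auto
  have "\<beta> = 0" using ab m by simp
  then have "\<alpha> = gx0 \<or> \<alpha> = gx0 + N" using ab assms(2) by auto
  then have "4 * of_int m = (-1::real) \<or> 4 * of_int m = (4 * real N - 1::real)"
    using ab m \<open>\<beta> = 0\<close> by (auto simp: gx0_def)
  then have "of_int (4 * m) = (of_int (-1)::real) \<or> of_int (4 * m) = (of_int (4 * int N - 1)::real)"
    by simp
  then have "4 * m = -1 \<or> 4 * m = 4 * int N - 1" by (simp only: of_int_eq_iff)
  then show False by presburger
qed

lemma gpar_closed: "pathfinish (gpar N R) = pathstart (gpar N R)"
  by (simp add: gpar_def)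

lemma gpar_valid: "valid_path (gpar N R)"
  by (simp add: gpar_def valid_path_join)

lemma wpos:
  assumes "0 < (a2-a1)*b2 - (b2-b1)*(a2-c)"
  shows "0 < Re (winding_number (linepath (gV a1 b1) (gV a2 b2)) (of_real c))"
  by (rule winding_number_linepath_pos_lt) (simp only: seg_im assms)

lemma gpar_winding:
  assumes "0 < R" "c < N"
  shows "winding_number (gpar N R) (of_nat c) = 1"
proof -
  let ?p = "of_nat c :: complex"
  have pz: "?p \<notin> path_image (gpar N R)" using gpar_notint[OF _ assms(1), of ?p N] by auto
  define s1 where "s1 = linepath (gV gx0 R) (gV (gx0 + N) R)"
  define s2 where "s2 = linepath (gV (gx0 + N) R) (gV (gx0 + N) (-R))"
  define s3 where "s3 = linepath (gV (gx0 + N) (-R)) (gV gx0 (-R))"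
  define s4 where "s4 = linepath (gV gx0 (-R)) (gV gx0 R)"
  have gp: "gpar N R = s1 +++ s2 +++ s3 +++ s4" by (simp add: gpar_def s1_def s2_def s3_def s4_def)
  have nz: "?p \<notin> path_image s1" "?p \<notin> path_image s2" "?p \<notin> path_image s3" "?p \<notin> path_image s4"
    using pz by (auto simp: gp path_image_join s1_def s2_def s3_def s4_def)
  have wsum: "winding_number (gpar N R) ?p = winding_number s1 ?p + winding_number s2 ?p + winding_number s3 ?p + winding_number s4 ?p"
    unfolding gp using nz
    by (simp add: winding_number_join path_image_join s1_def s2_def s3_def s4_def)
  have cN: "real c \<le> real N - 1" using assms(2) by linarith
  have Np: "0 < real N" using assms by simp
  have e1: "0 < (gx0 + N - gx0) * R - (R - R) * (gx0 + N - c)" using Np assms by simp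
  have e2: "0 < (gx0 + N - (gx0 + N)) * (-R) - (-R - R) * (gx0 + N - c)"
  proof -
    have "0 < 2 * R * (gx0 + N - c)" using assms cN by (intro mult_pos_pos) (auto simp: gx0_def)
    then show ?thesis by (simp add: algebra_simps)
  qed
  have e3: "0 < (gx0 - (gx0 + N)) * (-R) - (-R - (-R)) * (gx0 - c)" using Np assms by simp
  have e4: "0 < (gx0 - gx0) * R - (R - (-R)) * (gx0 - c)"
  proof -
    have "0 < 2 * R * (c - gx0)" using assms by (intro mult_pos_pos) (auto simp: gx0_def)
    then show ?thesis by (simp add: algebra_simps)
  qed
  have pos: "0 < Re (winding_number s1 ?p)" "0 < Re (winding_number s2 ?p)"
            "0 < Re (winding_number s3 ?p)" "0 < Re (winding_number s4 ?p)"
    unfolding s1_def s2_def s3_def s4_def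
    using wpos[OF e1] wpos[OF e2] wpos[OF e3] wpos[OF e4] by simp_all
  have half: "\<bar>Re (winding_number s1 ?p)\<bar> < 1/2" "\<bar>Re (winding_number s2 ?p)\<bar> < 1/2"
            "\<bar>Re (winding_number s3 ?p)\<bar> < 1/2" "\<bar>Re (winding_number s4 ?p)\<bar> < 1/2"
    unfolding s1_def s2_def s3_def s4_def
    by (rule winding_number_lt_half_linepath, use nz in \<open>simp add: s1_def s2_def s3_def s4_def\<close>)+
  have re: "0 < Re (winding_number (gpar N R) ?p)" "Re (winding_number (gpar N R) ?p) < 2"
    using pos half by (auto simp: wsum)
  have "winding_number (gpar N R) ?p \<in> \<int>"
    using integer_winding_number_eq[OF valid_path_imp_path[OF gpar_valid] pz] gpar_closed by simp
  then obtain m::int where m: "winding_number (gpar N R) ?p = of_int m" by (auto elim: Ints_cases)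
  then have "0 < m" "m < 2" using re by auto
  then have "m = 1" by simp
  then show ?thesis using m by simp
qed


lemma gphi_holo: "gphi N holomorphic_on A"
  unfolding gphi_def divide_inverse by (intro holomorphic_intros)

lemma gE_holo: "gE holomorphic_on A"
  unfolding gE_def by (intro holomorphic_intros)

lemma gh_residue:
  assumes "z \<in> \<int>"
  shows "residue (gh N) z = gphi N z / (2 * of_real pi * \<i>)"
proof -
  have gE1: "gE z = 1" using assms gE_eq_1_iff by simp
  have d: "((\<lambda>w. gE w - 1) has_field_derivative 2 * of_real pi * \<i>) (at z)"
  proof -
    have "((\<lambda>w. gE w - 1) has_field_derivative 2 * of_real pi * \<i> * gE z) (at z)"
      unfolding gE_def by (auto intro!: derivative_eq_intros)
    then show ?thesis using gE1 by simp
  qed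
  have "residue (\<lambda>w. gphi N w / (gE w - 1)) z = gphi N z / (2 * of_real pi * \<i>)"
    by (rule residue_simple_pole_deriv[where s=UNIV])
       (auto intro!: gphi_holo holomorphic_intros gE_holo d simp: gE1 gphi_def)
  then show ?thesis by (simp add: gh_def[abs_def])
qed

lemma gpar_integral:
  assumes "0 < R" "0 < N"
  shows "contour_integral (gpar N R) (gh N) = (\<Sum>c<N. gphi N (of_nat c))"
proof -
  define S where "S = {z. gx0 - 1/8 < gl z} \<inter> {z. gl z < gx0 + N + 1/8}"
  define K where "K = {z. gx0 \<le> gl z} \<inter> {z. gl z \<le> gx0 + N}"
  define pts where "pts = (of_nat ` {..<N} :: complex set)"
  have oS: "open S" unfolding S_def gl_def by (intro open_Int open_halfspace_lt open_halfspace_gt)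
  have cS: "convex S" unfolding S_def gl_def by (intro convex_Int convex_halfspace_lt convex_halfspace_gt)
  have cK: "convex K" unfolding K_def gl_def by (intro convex_Int convex_halfspace_le convex_halfspace_ge)
  have fin: "finite pts" by (simp add: pts_def)
  have intpts: "z \<in> pts" if "z \<in> S" "z \<in> \<int>" for z
  proof -
    from \<open>z \<in> \<int>\<close> obtain m::int where m: "z = of_int m" by (auto elim: Ints_cases)
    have "gl z = of_int m" using m by (simp add: gl_eq)
    then have "-3/8 < real_of_int m" "real_of_int m < real N - 1/8" using that by (auto simp: S_def gx0_def)
    then have "0 \<le> m" "m < int N" by linarith+
    then show ?thesis using m by (auto simp: pts_def image_iff intro!: bexI[of _ "nat m"])
  qed
  have holo: "gh N holomorphic_on S - pts"
    unfolding gh_def[abs_def]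
  proof (intro holomorphic_intros gphi_holo gE_holo)
    fix z assume "z \<in> S - pts"
    then show "gE z - 1 \<noteq> 0" using intpts gE_eq_1_iff by auto
  qed
  have imgK: "path_image (gpar N R) \<subseteq> K"
    using gpar_strip assms by (auto simp: K_def)
  have KS: "K \<subseteq> S" by (auto simp: K_def S_def)
  have img: "path_image (gpar N R) \<subseteq> S - pts"
  proof
    fix z assume z: "z \<in> path_image (gpar N R)"
    have "z \<notin> pts" using gpar_notint[OF z assms(1)] by (auto simp: pts_def)
    then show "z \<in> S - pts" using z imgK KS by auto
  qed
  have out: "\<forall>z. z \<notin> S \<longrightarrow> winding_number (gpar N R) z = 0"
    using winding_number_zero_outside[OF valid_path_imp_path[OF gpar_valid] cK gpar_closed _ imgK] KS by auto
  have "contour_integral (gpar N R) (gh N) = 2 * pi * \<i> * (\<Sum>p\<in>pts. winding_number (gpar N R) p * residue (gh N) p)"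
    by (rule Residue_theorem[OF oS convex_connected[OF cS] fin holo gpar_valid gpar_closed img out])
  also have "\<dots> = 2 * pi * \<i> * (\<Sum>c<N. winding_number (gpar N R) (of_nat c) * residue (gh N) (of_nat c))"
    unfolding pts_def by (subst sum.reindex) (auto simp: inj_on_def)
  also have "\<dots> = 2 * pi * \<i> * (\<Sum>c<N. gphi N (of_nat c) / (2 * of_real pi * \<i>))"
    using gpar_winding[OF assms(1)] gh_residue by (auto intro!: sum.cong)
  also have "\<dots> = (\<Sum>c<N. gphi N (of_nat c))"
    by (simp add: sum_divide_distrib[symmetric])
  finally show ?thesis .
qed


lemma lin_affine:
  "contour_integral (linepath (\<alpha>*a + \<beta>) (\<alpha>*b + \<beta>)) f = \<alpha> * contour_integral (linepath a b) (\<lambda>z. f (\<alpha>*z + \<beta>))"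
proof -
  have e: "linepath (\<alpha>*a + \<beta>) (\<alpha>*b + \<beta>) x = \<alpha> * linepath a b x + \<beta>" for x
    by (simp add: linepath_def scaleR_conv_of_real algebra_simps)
  have "contour_integral (linepath (\<alpha>*a + \<beta>) (\<alpha>*b + \<beta>)) f
       = integral {0..1} (\<lambda>x. \<alpha> * (f (\<alpha> * linepath a b x + \<beta>) * (b - a)))"
    unfolding contour_integral_integral vector_derivative_linepath_at e
    by (simp add: algebra_simps)
  also have "\<dots> = \<alpha> * contour_integral (linepath a b) (\<lambda>z. f (\<alpha>*z + \<beta>))"
    unfolding contour_integral_integral vector_derivative_linepath_at by simp
  finally show ?thesis .
qed

lemma gphi_shift: "gphi N (z + of_nat N) = gphi N z * exp (- 2 * of_real pi * \<i> * z)" if "N > 0"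
proof -
  have "gphi N z * exp (- 2 * of_real pi * \<i> * z) = exp (of_real pi * \<i> * z * (of_nat N - z) / of_nat N + (- 2 * of_real pi * \<i> * z))"
    by (simp only: gphi_def exp_add)
  also have "of_real pi * \<i> * z * (of_nat N - z) / of_nat N + (- 2 * of_real pi * \<i> * z)
      = of_real pi * \<i> * (z + of_nat N) * (of_nat N - (z + of_nat N)) / of_nat N"
    using that by (simp add: field_simps)
  finally show ?thesis by (simp add: gphi_def)
qed

lemma gE_shift: "gE (z + of_nat N) = gE z"
proof -
  have "gE (z + of_nat N) = gE z * exp (of_nat N * (2 * of_real pi * \<i>))"
    unfolding gE_def exp_add[symmetric] by (simp add: algebra_simps)
  also have "exp (of_nat N * (2 * of_real pi * \<i>)) = 1"
    by (simp only: exp_of_nat_mult exp_two_pi_i power_one)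
  finally show ?thesis by simp
qed

lemma gh_diff:
  assumes "N > 0" "z \<notin> \<int>"
  shows "gh N z - gh N (z + of_nat N) = gpsi N z"
proof -
  have ne: "gE z - 1 \<noteq> 0" using assms gE_eq_1_iff by auto
  have ee: "exp (- 2 * of_real pi * \<i> * z) * gE z = 1"
    by (simp add: gE_def exp_add[symmetric])
  have "gh N z - gh N (z + of_nat N) = gphi N z * (1 - exp (- 2 * of_real pi * \<i> * z)) / (gE z - 1)"
    unfolding gh_def gE_shift gphi_shift[OF assms(1)] by (simp add: diff_divide_distrib right_diff_distrib)
  also have "1 - exp (- 2 * of_real pi * \<i> * z) = exp (- 2 * of_real pi * \<i> * z) * (gE z - 1)"
    using ee by (simp add: algebra_simps)
  also have "gphi N z * (exp (- 2 * of_real pi * \<i> * z) * (gE z - 1)) / (gE z - 1) = gphi N z * exp (- 2 * of_real pi * \<i> * z)"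
    using ne by simp
  also have "\<dots> = gpsi N z"
  proof -
    have "of_real pi * \<i> * z * (of_nat N - z) / of_nat N + (- 2 * of_real pi * \<i> * z) = - of_real pi * \<i> * z^2 / of_nat N - of_real pi * \<i> * z"
      using assms(1) by (simp add: field_simps power2_eq_square)
    note eq = this
    show ?thesis unfolding gphi_def gpsi_def exp_add[symmetric] eq ..
  qed
  finally show ?thesis .
qed

lemma gphi_norm: "N > 0 \<Longrightarrow> norm (gphi N z) = exp (pi * (2 * Re z * Im z - N * Im z) / N)"
  by (simp add: gphi_def Re_divide field_simps power2_eq_square)

lemma gE_norm: "norm (gE z) = exp (- 2 * pi * Im z)"
  by (simp add: gE_def)


lemma gh_cont: "(\<And>z. z \<in> A \<Longrightarrow> z \<notin> \<int>) \<Longrightarrow> continuous_on A (gh N)"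
  unfolding gh_def[abs_def] gphi_def gE_def divide_inverse[of _ "of_nat N"]
  by (intro continuous_intros) (auto simp: gE_eq_1_iff[unfolded gE_def])

lemma gh_cont_shift: "(\<And>z. z \<in> A \<Longrightarrow> z \<notin> \<int>) \<Longrightarrow> continuous_on A (\<lambda>z. gh N (z + of_nat N))"
proof -
  assume a: "\<And>z. z \<in> A \<Longrightarrow> z \<notin> \<int>"
  have "z + of_nat N \<notin> \<int>" if "z \<in> A" for z
  proof
    assume "z + of_nat N \<in> \<int>"
    then have "z + of_nat N - of_nat N \<in> \<int>" by (intro Ints_diff) auto
    then show False using a that by simp
  qed
  then have "continuous_on ((\<lambda>z. z + of_nat N) ` A) (gh N)" by (intro gh_cont) auto
  then show ?thesis by (intro continuous_on_compose2[of _ "gh N" _ "\<lambda>z. z + of_nat N"]) (auto intro: continuous_intros)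
qed

lemma gV_shift: "gV (gx0 + real N) b = gV gx0 b + of_nat N"
  by (simp add: gV_def)

lemma gpar_decomp:
  assumes "0 < R" "0 < N"
  shows "(\<Sum>c<N. gphi N (of_nat c)) =
     contour_integral (linepath (gV gx0 R) (gV (gx0 + N) R)) (gh N) +
     contour_integral (linepath (gV (gx0 + N) (-R)) (gV gx0 (-R))) (gh N) +
     contour_integral (linepath (gV gx0 (-R)) (gV gx0 R)) (gpsi N)"
proof -
  define s1 where "s1 = linepath (gV gx0 R) (gV (gx0 + N) R)"
  define s2 where "s2 = linepath (gV (gx0 + N) R) (gV (gx0 + N) (-R))"
  define s3 where "s3 = linepath (gV (gx0 + N) (-R)) (gV gx0 (-R))"
  define s4 where "s4 = linepath (gV gx0 (-R)) (gV gx0 R)"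
  have gp: "gpar N R = s1 +++ s2 +++ s3 +++ s4" by (simp add: gpar_def s1_def s2_def s3_def s4_def)
  have ni: "z \<notin> \<int>" if "z \<in> path_image s1 \<union> path_image s2 \<union> path_image s3 \<union> path_image s4" for z
    using gpar_notint[OF _ assms(1), of z N] that
    by (auto simp: gp path_image_join s1_def s2_def s3_def s4_def)
  have ci: "gh N contour_integrable_on s1" "gh N contour_integrable_on s2"
           "gh N contour_integrable_on s3" "gh N contour_integrable_on s4"
    unfolding s1_def s2_def s3_def s4_def
    by (rule contour_integrable_continuous_linepath, rule gh_cont, use ni in \<open>auto simp: s1_def s2_def s3_def s4_def\<close>)+
  have ci4: "(\<lambda>z. gh N (z + of_nat N)) contour_integrable_on s4"
    unfolding s4_def
    by (rule contour_integrable_continuous_linepath, rule gh_cont_shift, use ni in \<open>auto simp: s4_def\<close>)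
  have vp: "valid_path s1" "valid_path s2" "valid_path s3" "valid_path s4" by (simp_all add: s1_def s2_def s3_def s4_def)
  have "contour_integral (gpar N R) (gh N) = contour_integral s1 (gh N) + contour_integral s2 (gh N) + contour_integral s3 (gh N) + contour_integral s4 (gh N)"
    unfolding gp using ci vp
    by (simp add: contour_integrable_joinI valid_path_join s1_def s2_def s3_def s4_def)
  moreover have "contour_integral s2 (gh N) = - contour_integral s4 (\<lambda>z. gh N (z + of_nat N))"
  proof -
    have "contour_integral s2 (gh N) = contour_integral (linepath (1 * gV gx0 R + of_nat N) (1 * gV gx0 (-R) + of_nat N)) (gh N)"
      by (simp add: s2_def gV_shift)
    also have "\<dots> = contour_integral (linepath (gV gx0 R) (gV gx0 (-R))) (\<lambda>z. gh N (z + of_nat N))"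
      by (subst lin_affine) simp
    also have "\<dots> = contour_integral (reversepath s4) (\<lambda>z. gh N (z + of_nat N))"
      by (simp add: s4_def)
    also have "\<dots> = - contour_integral s4 (\<lambda>z. gh N (z + of_nat N))"
      by (rule contour_integral_reversepath) (simp add: s4_def)
    finally show ?thesis .
  qed
  moreover have "contour_integral s4 (gh N) - contour_integral s4 (\<lambda>z. gh N (z + of_nat N)) = contour_integral s4 (gpsi N)"
  proof -
    have "contour_integral s4 (gh N) - contour_integral s4 (\<lambda>z. gh N (z + of_nat N)) = contour_integral s4 (\<lambda>z. gh N z - gh N (z + of_nat N))"
      by (rule contour_integral_diff[symmetric]) (use ci ci4 in auto)
    also have "\<dots> = contour_integral s4 (gpsi N)"
      by (rule contour_integral_cong) (use ni gh_diff[OF assms(2)] in auto)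
    finally show ?thesis .
  qed
  ultimately show ?thesis using gpar_integral[OF assms] by (simp add: s1_def s3_def s4_def algebra_simps)
qed


definition gB :: "nat \<Rightarrow> real \<Rightarrow> real" where
  "gB N R = 2 * exp (pi * (N*R + R - 2*R*R) / N)"

lemma exp_2piR: "1 \<le> R \<Longrightarrow> 2 \<le> exp (2 * pi * R)"
proof -
  assume "1 \<le> R"
  then have "pi * 1 \<le> pi * R" by (intro mult_left_mono) auto
  then have "2 \<le> 1 + 2 * pi * R" using pi_gt3 by linarith
  also have "\<dots> \<le> exp (2 * pi * R)" by (rule exp_ge_add_one_self)
  finally show ?thesis .
qed

lemma gh_bound_bot:
  assumes "0 < N" "1 \<le> R" "Im z = -R" "gx0 + R \<le> Re z"
  shows "norm (gh N z) \<le> gB N R"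
proof -
  have e: "norm (gE z) = exp (2 * pi * R)" using assms by (simp add: gE_norm)
  have "1 \<le> norm (gE z) - norm (1::complex)" using exp_2piR[OF assms(2)] e by simp
  also have "\<dots> \<le> norm (gE z - 1)" by (rule norm_triangle_ineq2)
  finally have d: "1 \<le> norm (gE z - 1)" .
  have "2 * Re z * Im z - N * Im z \<le> N*R + R - 2*R*R"
  proof -
    have "2 * R * (gx0 + R) \<le> 2 * R * Re z" using assms by (intro mult_left_mono) auto
    then show ?thesis using assms by (simp add: gx0_def algebra_simps)
  qed
  then have p: "norm (gphi N z) \<le> exp (pi * (N*R + R - 2*R*R) / N)"
    using assms by (simp add: gphi_norm divide_right_mono)
  have "norm (gh N z) = norm (gphi N z) / norm (gE z - 1)" by (simp add: gh_def norm_divide)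
  also have "\<dots> \<le> norm (gphi N z)" using d by (simp add: divide_le_eq mult_le_cancel_left1 order_trans[OF _ mult_left_mono[OF d]])
  also have "\<dots> \<le> gB N R" using p exp_gt_zero[of "pi * (N*R + R - 2*R*R) / N"] unfolding gB_def by linarith
  finally show ?thesis .
qed

lemma gh_bound_top:
  assumes "0 < N" "1 \<le> R" "Im z = R" "Re z \<le> gx0 + N - R"
  shows "norm (gh N z) \<le> gB N R"
proof -
  have e: "norm (gE z) = inverse (exp (2 * pi * R))" using assms by (simp add: gE_norm exp_minus)
  have "norm (gE z) \<le> inverse 2" unfolding e by (rule le_imp_inverse_le[OF exp_2piR[OF assms(2)]]) simp
  then have "norm (gE z) \<le> 1/2" by simp
  then have "1/2 \<le> norm (1::complex) - norm (gE z)" by simp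
  also have "\<dots> \<le> norm (gE z - 1)" using norm_triangle_ineq2[of 1 "gE z"] by (simp add: norm_minus_commute)
  finally have d: "1/2 \<le> norm (gE z - 1)" .
  have "2 * Re z * Im z - N * Im z \<le> N*R + R - 2*R*R"
  proof -
    have "2 * R * Re z \<le> 2 * R * (gx0 + N - R)" using assms by (intro mult_left_mono) auto
    then show ?thesis using assms by (simp add: gx0_def algebra_simps)
  qed
  then have p: "norm (gphi N z) \<le> exp (pi * (N*R + R - 2*R*R) / N)"
    using assms by (simp add: gphi_norm divide_right_mono)
  have "norm (gh N z) = norm (gphi N z) / norm (gE z - 1)" by (simp add: gh_def norm_divide)
  also have "\<dots> \<le> norm (gphi N z) / (1/2)" using d by (intro divide_left_mono) auto
  also have "\<dots> \<le> gB N R" using p by (simp add: gB_def)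
  finally show ?thesis .
qed

lemma gB_lim: "0 < N \<Longrightarrow> ((\<lambda>R. real N * gB N R) \<longlongrightarrow> 0) at_top"
  unfolding gB_def by real_asymp


lemma ci_norm_bound:
  assumes "f contour_integrable_on linepath a b" "0 \<le> B" "\<And>x. x \<in> closed_segment a b \<Longrightarrow> norm (f x) \<le> B"
  shows "norm (contour_integral (linepath a b) f) \<le> B * norm (b - a)"
  using has_contour_integral_bound_linepath[OF has_contour_integral_integral[OF assms(1)] assms(2,3)] .

lemma gpsi_lim:
  assumes "0 < N"
  shows "((\<lambda>R. contour_integral (linepath (gV gx0 (-R)) (gV gx0 R)) (gpsi N)) \<longlongrightarrow> (\<Sum>c<N. gphi N (of_nat c))) at_top"
proof -
  let ?G = "\<Sum>c<N. gphi N (of_nat c)"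
  let ?I = "\<lambda>R. contour_integral (linepath (gV gx0 (-R)) (gV gx0 R)) (gpsi N)"
  have ev: "eventually (\<lambda>R. norm (?G - ?I R) \<le> 2 * (real N * gB N R)) at_top"
    using eventually_ge_at_top[of "1::real"]
  proof eventually_elim
    case (elim R)
    have gB0: "0 \<le> gB N R" by (simp add: gB_def)
    define s1 where "s1 = linepath (gV gx0 R) (gV (gx0 + N) R)"
    define s3 where "s3 = linepath (gV (gx0 + N) (-R)) (gV gx0 (-R))"
    have ni: "z \<notin> \<int>" if "z \<in> path_image s1 \<union> path_image s3" for z
      using gpar_notint[of z N R] that elim
      by (auto simp: gpar_def path_image_join s1_def s3_def)
    have ci: "gh N contour_integrable_on s1" "gh N contour_integrable_on s3"
      unfolding s1_def s3_def
      by (rule contour_integrable_continuous_linepath, rule gh_cont, use ni in \<open>auto simp: s1_def s3_def\<close>)+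
    have b1: "norm (contour_integral s1 (gh N)) \<le> gB N R * real N"
    proof -
      have "norm (contour_integral s1 (gh N)) \<le> gB N R * norm (gV (gx0 + N) R - gV gx0 R)"
        unfolding s1_def
      proof (rule ci_norm_bound[OF ci(1)[unfolded s1_def] gB0])
        fix x assume "x \<in> closed_segment (gV gx0 R) (gV (gx0 + real N) R)"
        then obtain u where u: "0 \<le> u" "u \<le> 1" "Re x = ((1-u)*gx0 + u*(gx0+N)) + ((1-u)*R+u*R)" "Im x = -((1-u)*R + u*R)"
          using seg_param by blast
        have uN: "0 \<le> u * N" using u by simp
        have rx: "Re x = gx0 + u*N + R" "Im x = -R" using u(3,4) by (simp_all add: algebra_simps)
        show "norm (gh N x) \<le> gB N R"
          by (intro gh_bound_bot assms) (use rx uN elim in linarith)+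
      qed
      then show ?thesis by (simp add: gV_def)
    qed
    have b3: "norm (contour_integral s3 (gh N)) \<le> gB N R * real N"
    proof -
      have "norm (contour_integral s3 (gh N)) \<le> gB N R * norm (gV gx0 (-R) - gV (gx0 + N) (-R))"
        unfolding s3_def
      proof (rule ci_norm_bound[OF ci(2)[unfolded s3_def] gB0])
        fix x assume "x \<in> closed_segment (gV (gx0 + real N) (-R)) (gV gx0 (-R))"
        then obtain u where u: "0 \<le> u" "u \<le> 1" "Re x = ((1-u)*(gx0+N) + u*gx0) + ((1-u)*(-R)+u*(-R))" "Im x = -((1-u)*(-R) + u*(-R))"
          using seg_param by blast
        have uN: "0 \<le> u * N" using u by simp
        have rx: "Re x = gx0 + N - u*N - R" "Im x = R" using u(3,4) by (simp_all add: algebra_simps)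
        show "norm (gh N x) \<le> gB N R"
          by (intro gh_bound_top assms) (use rx uN elim in linarith)+
      qed
      then show ?thesis by (simp add: gV_def)
    qed
    have "?G - ?I R = contour_integral s1 (gh N) + contour_integral s3 (gh N)"
      using gpar_decomp[of R N] elim assms by (simp add: s1_def s3_def)
    then have "norm (?G - ?I R) \<le> norm (contour_integral s1 (gh N)) + norm (contour_integral s3 (gh N))"
      by (simp add: norm_triangle_ineq)
    then show ?case using b1 b3 by (simp add: algebra_simps)
  qed
  have "((\<lambda>R. 2 * (real N * gB N R)) \<longlongrightarrow> 2 * 0) at_top"
    by (intro tendsto_mult tendsto_const gB_lim assms)
  then have "((\<lambda>R. ?G - ?I R) \<longlongrightarrow> 0) at_top"
    using Lim_null_comparison[OF ev] by simp
  then have "((\<lambda>R. ?G - (?G - ?I R)) \<longlongrightarrow> ?G - 0) at_top"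
    by (intro tendsto_diff tendsto_const)
  then show ?thesis by simp
qed


definition gg :: "complex \<Rightarrow> complex" where "gg w = exp (- of_real pi * \<i> * w^2)"
definition gJ :: "real \<Rightarrow> real \<Rightarrow> complex" where
  "gJ \<delta> r = contour_integral (linepath (gV \<delta> (-r)) (gV \<delta> r)) gg"

lemma gg_holo: "gg holomorphic_on A" unfolding gg_def by (intro holomorphic_intros)

lemma gg_norm: "norm (gg w) = exp (2 * pi * Re w * Im w)"
  by (simp add: gg_def power2_eq_square algebra_simps)

lemma gJ_shift_lim:
  assumes "0 \<le> \<delta>"
  shows "((\<lambda>r. gJ \<delta> r - gJ 0 r) \<longlongrightarrow> 0) at_top"
proof -
  define B where "B r = exp (2*pi*r*\<delta> - 2*pi*r*r)" for r
  have ev: "eventually (\<lambda>r. norm (gJ \<delta> r - gJ 0 r) \<le> 2 * (B r * \<delta>)) at_top"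
    using eventually_ge_at_top[of "0::real"]
  proof eventually_elim
    case (elim r)
    define l1 where "l1 = linepath (gV 0 (-r)) (gV 0 r)"
    define l2 where "l2 = linepath (gV 0 r) (gV \<delta> r)"
    define l3 where "l3 = linepath (gV \<delta> r) (gV \<delta> (-r))"
    define l4 where "l4 = linepath (gV \<delta> (-r)) (gV 0 (-r))"
    have cil: "gg contour_integrable_on linepath a b" for a b
      by (auto intro!: contour_integrable_holomorphic_simple[OF gg_holo[of UNIV]])
    have ci: "gg contour_integrable_on l" if "l \<in> {l1,l2,l3,l4}" for l
      using that cil unfolding l1_def l2_def l3_def l4_def by auto
    have vp: "valid_path l1" "valid_path l2" "valid_path l3" "valid_path l4" by (simp_all add: l1_def l2_def l3_def l4_def)
    have "(gg has_contour_integral 0) (l1 +++ l2 +++ l3 +++ l4)"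
      by (rule Cauchy_theorem_convex_simple[OF gg_holo convex_UNIV]) (auto simp: l1_def l2_def l3_def l4_def valid_path_join)
    then have "contour_integral (l1 +++ l2 +++ l3 +++ l4) gg = 0" by (rule contour_integral_unique)
    then have sum0: "contour_integral l1 gg + contour_integral l2 gg + contour_integral l3 gg + contour_integral l4 gg = 0"
      using ci vp by (simp add: contour_integrable_joinI valid_path_join l1_def l2_def l3_def l4_def add.assoc)
    have l3r: "contour_integral l3 gg = - gJ \<delta> r"
    proof -
      have "contour_integral l3 gg = contour_integral (reversepath (linepath (gV \<delta> (-r)) (gV \<delta> r))) gg"
        by (simp add: l3_def)
      also have "\<dots> = - gJ \<delta> r" unfolding gJ_def by (rule contour_integral_reversepath) simp
      finally show ?thesis .
    qed
    have B0: "0 \<le> B r" by (simp add: B_def)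
    have b2: "norm (contour_integral l2 gg) \<le> B r * \<delta>"
    proof -
      have "norm (contour_integral l2 gg) \<le> B r * norm (gV \<delta> r - gV 0 r)"
        unfolding l2_def
      proof (rule ci_norm_bound[OF cil B0])
        fix x assume "x \<in> closed_segment (gV 0 r) (gV \<delta> r)"
        then obtain u where u: "0 \<le> u" "u \<le> 1" "Re x = ((1-u)*0 + u*\<delta>) + ((1-u)*r+u*r)" "Im x = -((1-u)*r + u*r)"
          using seg_param by blast
        have rx: "Re x = u*\<delta> + r" "Im x = -r" using u(3,4) by (simp_all add: algebra_simps)
        have "0 \<le> 2*pi*r*(u * \<delta>)" "0 \<le> 2*pi*r*\<delta>" using u assms elim by simp_all
        moreover have "2 * pi * Re x * Im x = -(2*pi*r*(u * \<delta>)) - 2*pi*r*r" by (simp add: rx algebra_simps)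
        ultimately have "2 * pi * Re x * Im x \<le> 2*pi*r*\<delta> - 2*pi*r*r" by linarith
        then show "norm (gg x) \<le> B r" by (simp add: gg_norm B_def)
      qed
      then show ?thesis using assms by (simp add: gV_def)
    qed
    have b4: "norm (contour_integral l4 gg) \<le> B r * \<delta>"
    proof -
      have "norm (contour_integral l4 gg) \<le> B r * norm (gV 0 (-r) - gV \<delta> (-r))"
        unfolding l4_def
      proof (rule ci_norm_bound[OF cil B0])
        fix x assume "x \<in> closed_segment (gV \<delta> (-r)) (gV 0 (-r))"
        then obtain u where u: "0 \<le> u" "u \<le> 1" "Re x = ((1-u)*\<delta> + u*0) + ((1-u)*(-r)+u*(-r))" "Im x = -((1-u)*(-r) + u*(-r))"
          using seg_param by blast
        have rx: "Re x = (1-u)*\<delta> - r" "Im x = r" using u(3,4) by (simp_all add: algebra_simps)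
        have "(1-u) * \<delta> \<le> \<delta>" using u assms by (simp add: mult_left_le_one_le)
        then have "2*pi*r*((1-u) * \<delta>) \<le> 2*pi*r*\<delta>" using elim by (intro mult_left_mono) auto
        moreover have "2 * pi * Re x * Im x = 2*pi*r*((1-u) * \<delta>) - 2*pi*r*r" by (simp add: rx algebra_simps)
        ultimately have "2 * pi * Re x * Im x \<le> 2*pi*r*\<delta> - 2*pi*r*r" by linarith
        then show "norm (gg x) \<le> B r" by (simp add: gg_norm B_def)
      qed
      then show ?thesis using assms by (simp add: gV_def)
    qed
    have l1r: "contour_integral l1 gg = gJ 0 r" by (simp add: gJ_def l1_def)
    have "contour_integral l2 gg + contour_integral l4 gg =
       (contour_integral l1 gg + contour_integral l2 gg + contour_integral l3 gg + contour_integral l4 gg) - contour_integral l1 gg - contour_integral l3 gg"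
      by (simp add: algebra_simps)
    also have "\<dots> = 0 - contour_integral l1 gg - contour_integral l3 gg" by (subst sum0, rule refl)
    also have "\<dots> = 0 - gJ 0 r - (- gJ \<delta> r)" by (simp only: l1r l3r)
    finally have "gJ \<delta> r - gJ 0 r = contour_integral l2 gg + contour_integral l4 gg"
      by simp
    then have "norm (gJ \<delta> r - gJ 0 r) \<le> norm (contour_integral l2 gg) + norm (contour_integral l4 gg)"
      by (simp add: norm_triangle_ineq)
    then show ?case using b2 b4 by simp
  qed
  have "((\<lambda>r. 2 * (B r * \<delta>)) \<longlongrightarrow> 0) at_top"
    unfolding B_def by real_asymp
  then show ?thesis using Lim_null_comparison[OF ev] by simp
qed


lemma gpsi_gg:
  assumes "0 < N"
  shows "gpsi N (of_real (sqrt N) * w + (- of_nat N / 2)) = exp (of_real pi * \<i> * of_nat N / 4) * gg w"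
proof -
  define s where "s = (of_real (sqrt N) :: complex)"
  have s2: "s * s = of_nat N" unfolding s_def by (simp flip: of_real_mult)
  have Nne: "(of_nat N :: complex) \<noteq> 0" using assms by simp
  have "- of_real pi * \<i> * (s * w + (- of_nat N / 2))^2 / of_nat N - of_real pi * \<i> * (s * w + (- of_nat N / 2))
      = of_real pi * \<i> * of_nat N / 4 + (- of_real pi * \<i> * w^2)"
  proof -
    have "(s * w + (- of_nat N / 2))^2 = (s * s) * (w * w) - s * w * of_nat N + of_nat N * of_nat N/4"
      by (simp add: power2_eq_square field_simps)
    also have "\<dots> = of_nat N * (w * w) - s * w * of_nat N + of_nat N * of_nat N/4" by (simp only: s2)
    finally have e: "(s * w + (- of_nat N / 2))^2 = of_nat N * (w * w) - s * w * of_nat N + of_nat N * of_nat N/4" .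
    show ?thesis unfolding e using Nne by (simp add: field_simps power2_eq_square)
  qed
  note eq = this
  have "gpsi N (s * w + (- of_nat N / 2)) = exp (of_real pi * \<i> * of_nat N / 4) * gg w"
    unfolding gpsi_def gg_def exp_add[symmetric] eq ..
  then show ?thesis by (simp only: s_def)
qed

lemma gpsi_scale:
  assumes "0 < N"
  shows "contour_integral (linepath (gV gx0 (-R)) (gV gx0 R)) (gpsi N)
     = of_real (sqrt N) * exp (of_real pi * \<i> * of_nat N / 4) * gJ ((gx0 + N/2) / sqrt N) (R / sqrt N)"
proof -
  define \<delta> where "\<delta> = (gx0 + N/2) / sqrt N"
  define r where "r = R / sqrt N"
  have sN: "sqrt (real N) > 0" using assms by simp
  have v: "gV gx0 b = of_real (sqrt N) * gV \<delta> (b / sqrt N) + (- of_nat N / 2)" for b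
  proof -
    have a: "sqrt N * \<delta> = gx0 + N/2" "sqrt N * (b / sqrt N) = b" using sN by (simp_all add: \<delta>_def)
    have "of_real (sqrt N) * gV \<delta> (b / sqrt N) + (- of_nat N / 2) = of_real (sqrt N * \<delta>) + of_real (sqrt N * (b / sqrt N)) * gv - of_nat N / 2"
      unfolding gV_def of_real_mult by (simp add: algebra_simps)
    also have "\<dots> = gV gx0 b" unfolding a gV_def by simp
    finally show ?thesis by simp
  qed
  have "contour_integral (linepath (gV gx0 (-R)) (gV gx0 R)) (gpsi N)
     = of_real (sqrt N) * contour_integral (linepath (gV \<delta> (-r)) (gV \<delta> r)) (\<lambda>w. gpsi N (of_real (sqrt N) * w + (- of_nat N / 2)))"
  proof -
    have v1: "gV gx0 (-R) = of_real (sqrt N) * gV \<delta> (-r) + (- of_nat N / 2)"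
      using v[of "-R"] by (simp add: r_def)
    have v2: "gV gx0 R = of_real (sqrt N) * gV \<delta> r + (- of_nat N / 2)"
      using v[of R] by (simp add: r_def)
    show ?thesis unfolding v1 v2 by (rule lin_affine)
  qed
  also have "\<dots> = of_real (sqrt N) * contour_integral (linepath (gV \<delta> (-r)) (gV \<delta> r)) (\<lambda>w. exp (of_real pi * \<i> * of_nat N / 4) * gg w)"
    using gpsi_gg[OF assms] by simp
  also have "\<dots> = of_real (sqrt N) * (exp (of_real pi * \<i> * of_nat N / 4) * gJ \<delta> r)"
    unfolding gJ_def
    by (subst contour_integral_lmul) (auto intro!: contour_integrable_holomorphic_simple[OF gg_holo[of UNIV]])
  finally show ?thesis by (simp add: \<delta>_def r_def)
qed


lemma gJ0_lim: "((\<lambda>r. gJ 0 r) \<longlongrightarrow> exp (- of_real pi * \<i> / 4)) at_top"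
proof -
  have d1: "(gx0 + real 1 / 2) / sqrt (real 1) = 1/4" by (simp add: gx0_def)
  have "((\<lambda>R. of_real (sqrt (real 1)) * exp (of_real pi * \<i> * of_nat 1 / 4) * gJ ((gx0 + real 1/2) / sqrt (real 1)) (R / sqrt (real 1))) \<longlongrightarrow> (\<Sum>c<1. gphi 1 (of_nat c))) at_top"
    using gpsi_lim[of 1] gpsi_scale[of 1] by simp
  then have "((\<lambda>R. exp (of_real pi * \<i> / 4) * gJ (1/4) R) \<longlongrightarrow> 1) at_top"
    by (simp add: gx0_def gphi_def)
  then have tl: "((\<lambda>R. exp (- of_real pi * \<i> / 4) * (exp (of_real pi * \<i> / 4) * gJ (1/4) R)) \<longlongrightarrow> exp (- of_real pi * \<i> / 4) * 1) at_top"
    by (intro tendsto_mult tendsto_const)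
  have c: "exp (- of_real pi * \<i> / 4) * exp (of_real pi * \<i> / 4) = 1"
    by (simp add: exp_minus)
  have "exp (- of_real pi * \<i> / 4) * (exp (of_real pi * \<i> / 4) * x) = x" for x
    by (simp only: mult.assoc[symmetric] c mult_1)
  then have eqf: "(\<lambda>R. exp (- of_real pi * \<i> / 4) * (exp (of_real pi * \<i> / 4) * gJ (1/4) R)) = gJ (1/4)"
    by (intro ext)
  have l: "((\<lambda>R. gJ (1/4) R) \<longlongrightarrow> exp (- of_real pi * \<i> / 4)) at_top"
    using tl unfolding eqf mult_1_right .
  have "((\<lambda>r. gJ (1/4) r - (gJ (1/4) r - gJ 0 r)) \<longlongrightarrow> exp (- of_real pi * \<i> / 4) - 0) at_top"
    by (intro tendsto_diff l gJ_shift_lim) simp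
  then show ?thesis by simp
qed

lemma gJ_lim:
  assumes "0 \<le> \<delta>"
  shows "((\<lambda>r. gJ \<delta> r) \<longlongrightarrow> exp (- of_real pi * \<i> / 4)) at_top"
proof -
  have "((\<lambda>r. (gJ \<delta> r - gJ 0 r) + gJ 0 r) \<longlongrightarrow> 0 + exp (- of_real pi * \<i> / 4)) at_top"
    by (intro tendsto_add gJ_shift_lim assms gJ0_lim)
  then show ?thesis by simp
qed

theorem gauss_sum:
  assumes "0 < N"
  shows "(\<Sum>c<N. gphi N (of_nat c)) = of_real (sqrt N) * exp (of_real pi * \<i> * (of_nat N - 1) / 4)"
proof -
  define \<delta> where "\<delta> = (gx0 + N/2) / sqrt N"
  have sN: "0 < sqrt (real N)" using assms by simp
  have d0: "0 \<le> \<delta>" unfolding \<delta>_def using assms by (intro divide_nonneg_pos sN) (auto simp: gx0_def)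
  have "filterlim (\<lambda>R. (1 / sqrt (real N)) * R) at_top at_top"
    by (rule filterlim_tendsto_pos_mult_at_top[OF tendsto_const _ filterlim_ident]) (use sN in simp)
  then have f: "filterlim (\<lambda>R. R / sqrt (real N)) at_top at_top" by simp
  have "((\<lambda>R. gJ \<delta> (R / sqrt N)) \<longlongrightarrow> exp (- of_real pi * \<i> / 4)) at_top"
    by (rule filterlim_compose[OF gJ_lim[OF d0] f])
  then have l1: "((\<lambda>R. of_real (sqrt N) * exp (of_real pi * \<i> * of_nat N / 4) * gJ \<delta> (R / sqrt N)) \<longlongrightarrow>
      of_real (sqrt N) * exp (of_real pi * \<i> * of_nat N / 4) * exp (- of_real pi * \<i> / 4)) at_top"
    by (intro tendsto_mult tendsto_const)
  have l2: "((\<lambda>R. of_real (sqrt N) * exp (of_real pi * \<i> * of_nat N / 4) * gJ \<delta> (R / sqrt N)) \<longlongrightarrow>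
      (\<Sum>c<N. gphi N (of_nat c))) at_top"
    using gpsi_lim[OF assms] gpsi_scale[OF assms] by (simp add: \<delta>_def)
  have "(\<Sum>c<N. gphi N (of_nat c)) = of_real (sqrt N) * exp (of_real pi * \<i> * of_nat N / 4) * exp (- of_real pi * \<i> / 4)"
    using tendsto_unique[OF trivial_limit_at_top_linorder l2 l1] by simp
  also have "\<dots> = of_real (sqrt N) * exp (of_real pi * \<i> * (of_nat N - 1) / 4)"
    by (simp add: mult.assoc exp_add[symmetric] field_simps)
  finally show ?thesis .
qed


definition Xs :: "nat \<Rightarrow> int set" where "Xs n = {1..int n}"
definition Pm :: "int list \<Rightarrow> int list set" where "Pm l = {\<alpha>. mset \<alpha> = mset l}"
definition Kt :: "(int \<Rightarrow> int \<Rightarrow> complex) \<Rightarrow> int list \<Rightarrow> int list \<Rightarrow> complex" where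
  "Kt f \<alpha> \<beta> = (\<Prod>j<length \<alpha>. f (\<alpha>!j) (\<beta>!j))"
definition ccf :: "int list \<Rightarrow> real" where "ccf l = 1 / sqrt (real (card (Pm l)))"
definition symm :: "(int \<Rightarrow> int \<Rightarrow> complex) \<Rightarrow> int list \<Rightarrow> int list \<Rightarrow> complex" where
  "symm f l m = of_real (ccf l * ccf m) * (\<Sum>\<alpha>\<in>Pm l. \<Sum>\<beta>\<in>Pm m. Kt f \<alpha> \<beta>)"

lemma Pm_eq: "Pm l = permutations_of_multiset (mset l)"
  by (simp add: Pm_def permutations_of_multiset_def)

lemma finite_Pm [simp]: "finite (Pm l)"
  by (simp add: Pm_eq)

lemma self_Pm [simp]: "l \<in> Pm l" by (simp add: Pm_def)

lemma card_Pm_pos: "0 < card (Pm l)"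
  using self_Pm[of l] finite_Pm[of l] card_gt_0_iff by blast

lemma Pm_length: "\<alpha> \<in> Pm l \<Longrightarrow> length \<alpha> = length l"
  unfolding Pm_def by (metis mem_Collect_eq size_mset)

lemma ccf_sq: "ccf l * ccf l * real (card (Pm l)) = 1"
proof -
  have "0 < real (card (Pm l))" using card_Pm_pos[of l] by simp
  moreover have "Pm l \<noteq> {}" using self_Pm[of l] by blast
  ultimately show ?thesis by (simp add: ccf_def)
qed

lemma Kt_perm:
  assumes "p permutes {..<length \<alpha>}" "length \<beta> = length \<alpha>"
  shows "Kt f (permute_list p \<alpha>) (permute_list p \<beta>) = Kt f \<alpha> \<beta>"
proof -
  have "Kt f (permute_list p \<alpha>) (permute_list p \<beta>) = (\<Prod>j<length \<alpha>. f (\<alpha>!(p j)) (\<beta>!(p j)))"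
    unfolding Kt_def using assms by (auto intro!: prod.cong simp: permute_list_nth)
  also have "\<dots> = (\<Prod>j<length \<alpha>. f (\<alpha>!j) (\<beta>!j))"
    using prod.permute[OF assms(1), of "\<lambda>j. f (\<alpha>!j) (\<beta>!j)"] by (simp add: comp_def)
  finally show ?thesis by (simp add: Kt_def)
qed

lemma sum_inv2:
  assumes "mset \<beta>' = mset \<beta>" "length \<beta> = length l"
  shows "(\<Sum>\<alpha>\<in>Pm l. Kt f \<alpha> \<beta>') = (\<Sum>\<alpha>\<in>Pm l. Kt f \<alpha> \<beta>)"
proof -
  obtain p where p: "p permutes {..<length \<beta>}" "permute_list p \<beta> = \<beta>'"
    using mset_eq_permutation[OF assms(1)] by blast
  have ip: "inv p permutes {..<length \<beta>}" using permutes_inv[OF p(1)] .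
  have bka: "permute_list p (permute_list (inv p) a) = a" if "length a = length \<beta>" for a
  proof -
    have "permute_list p (permute_list (inv p) a) = permute_list (inv p \<circ> p) a"
      by (rule permute_list_compose[symmetric]) (use p that in simp)
    also have "inv p \<circ> p = id" using permutes_inv_o(2)[OF p(1)] .
    finally show ?thesis by simp
  qed
  have bkb: "permute_list (inv p) (permute_list p a) = a" if "length a = length \<beta>" for a
  proof -
    have "permute_list (inv p) (permute_list p a) = permute_list (p \<circ> inv p) a"
      by (rule permute_list_compose[symmetric]) (use ip that in simp)
    also have "p \<circ> inv p = id" using permutes_inv_o(1)[OF p(1)] .
    finally show ?thesis by simp
  qed
  show ?thesis
  proof (rule sum.reindex_bij_witness[where i="permute_list p" and j="permute_list (inv p)"])
    fix a assume a: "a \<in> Pm l"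
    then have la: "length a = length \<beta>" using Pm_length assms by simp
    show "permute_list p (permute_list (inv p) a) = a" using bka[OF la] .
    show "permute_list (inv p) a \<in> Pm l" using a la ip by (simp add: Pm_def)
    show "Kt f (permute_list (inv p) a) \<beta> = Kt f a \<beta>'"
    proof -
      have "Kt f a \<beta>' = Kt f (permute_list p (permute_list (inv p) a)) (permute_list p \<beta>)"
        using bka[OF la] p(2) by simp
      also have "\<dots> = Kt f (permute_list (inv p) a) \<beta>"
        by (rule Kt_perm) (use p la in auto)
      finally show ?thesis by simp
    qed
  next
    fix b assume b: "b \<in> Pm l"
    then have lb: "length b = length \<beta>" using Pm_length assms by simp
    show "permute_list (inv p) (permute_list p b) = b" using bkb[OF lb] .
    show "permute_list p b \<in> Pm l" using b lb p by (simp add: Pm_def)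
  qed
qed

lemma Kt_swap: "length \<beta> = length \<alpha> \<Longrightarrow> Kt f \<alpha> \<beta> = Kt (\<lambda>x y. f y x) \<beta> \<alpha>"
  by (simp add: Kt_def)

lemma sum_inv1:
  assumes "mset \<beta>' = mset \<beta>" "length \<beta> = length l"
  shows "(\<Sum>\<gamma>\<in>Pm l. Kt f \<beta>' \<gamma>) = (\<Sum>\<gamma>\<in>Pm l. Kt f \<beta> \<gamma>)"
proof -
  have lb': "length \<beta>' = length l" using assms by (metis size_mset)
  have "(\<Sum>\<gamma>\<in>Pm l. Kt f \<beta>' \<gamma>) = (\<Sum>\<gamma>\<in>Pm l. Kt (\<lambda>x y. f y x) \<gamma> \<beta>')"
    by (intro sum.cong refl Kt_swap) (use lb' Pm_length in auto)
  also have "\<dots> = (\<Sum>\<gamma>\<in>Pm l. Kt (\<lambda>x y. f y x) \<gamma> \<beta>)" by (rule sum_inv2[OF assms])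
  also have "\<dots> = (\<Sum>\<gamma>\<in>Pm l. Kt f \<beta> \<gamma>)"
    by (intro sum.cong refl Kt_swap[symmetric]) (use assms Pm_length in auto)
  finally show ?thesis .
qed

lemma lists_Suc:
  "{\<beta>. length \<beta> = Suc k \<and> set \<beta> \<subseteq> X} = (\<lambda>(x,\<beta>). x#\<beta>) ` (X \<times> {\<beta>. length \<beta> = k \<and> set \<beta> \<subseteq> X})"
  by (auto simp: image_iff length_Suc_conv)

lemma sum_prod_lists:
  fixes h :: "nat \<Rightarrow> 'a \<Rightarrow> 'b::comm_semiring_1"
  assumes "finite X"
  shows "(\<Sum>\<beta>\<in>{\<beta>. length \<beta> = k \<and> set \<beta> \<subseteq> X}. \<Prod>j<k. h j (\<beta>!j)) = (\<Prod>j<k. \<Sum>x\<in>X. h j x)"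
proof (induction k arbitrary: h)
  case 0
  have "{\<beta>::'a list. length \<beta> = 0 \<and> set \<beta> \<subseteq> X} = {[]}" by auto
  then show ?case by simp
next
  case (Suc k)
  have fin: "finite {\<beta>. length \<beta> = k \<and> set \<beta> \<subseteq> X}"
    using finite_lists_length_eq[OF assms, of k] by (simp add: conj_commute)
  have inj: "inj_on (\<lambda>(x,\<beta>). x#\<beta>) (X \<times> {\<beta>. length \<beta> = k \<and> set \<beta> \<subseteq> X})"
    by (auto simp: inj_on_def)
  have "(\<Sum>\<beta>\<in>{\<beta>. length \<beta> = Suc k \<and> set \<beta> \<subseteq> X}. \<Prod>j<Suc k. h j (\<beta>!j))
      = (\<Sum>(x,\<beta>)\<in>X \<times> {\<beta>. length \<beta> = k \<and> set \<beta> \<subseteq> X}. \<Prod>j<Suc k. h j ((x#\<beta>)!j))"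
    unfolding lists_Suc by (subst sum.reindex[OF inj]) (simp add: case_prod_beta)
  also have "\<dots> = (\<Sum>x\<in>X. \<Sum>\<beta>\<in>{\<beta>. length \<beta> = k \<and> set \<beta> \<subseteq> X}. h 0 x * (\<Prod>j<k. h (Suc j) (\<beta>!j)))"
    by (subst sum.cartesian_product[symmetric]) (simp add: prod.lessThan_Suc_shift del: prod.lessThan_Suc)
  also have "\<dots> = (\<Sum>x\<in>X. h 0 x * (\<Prod>j<k. \<Sum>y\<in>X. h (Suc j) y))"
  proof -
    have "(\<Sum>\<beta>\<in>{\<beta>. length \<beta> = k \<and> set \<beta> \<subseteq> X}. \<Prod>j<k. h (Suc j) (\<beta>!j)) = (\<Prod>j<k. \<Sum>y\<in>X. h (Suc j) y)"
      using Suc.IH[of "\<lambda>j. h (Suc j)"] by simp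
    moreover have "(\<Sum>\<beta>\<in>{\<beta>. length \<beta> = k \<and> set \<beta> \<subseteq> X}. h 0 x * (\<Prod>j<k. h (Suc j) (\<beta>!j)))
        = h 0 x * (\<Sum>\<beta>\<in>{\<beta>. length \<beta> = k \<and> set \<beta> \<subseteq> X}. \<Prod>j<k. h (Suc j) (\<beta>!j))" for x
      by (rule sum_distrib_left[symmetric])
    ultimately show ?thesis by simp
  qed
  also have "\<dots> = (\<Prod>j<Suc k. \<Sum>x\<in>X. h j x)"
    by (simp add: prod.lessThan_Suc_shift sum_distrib_right del: prod.lessThan_Suc)
  finally show ?case .
qed


definition Wl :: "nat \<Rightarrow> nat \<Rightarrow> int list set" where "Wl n k = {\<beta>. length \<beta> = k \<and> set \<beta> \<subseteq> Xs n}"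
definition kc :: "nat \<Rightarrow> (int \<Rightarrow> int \<Rightarrow> complex) \<Rightarrow> (int \<Rightarrow> int \<Rightarrow> complex) \<Rightarrow> int \<Rightarrow> int \<Rightarrow> complex" where
  "kc n f g a b = (\<Sum>x\<in>Xs n. f a x * g x b)"

lemma finite_Xs [simp]: "finite (Xs n)" by (simp add: Xs_def)

lemma Akn_iff: "l \<in> Akn k n \<longleftrightarrow> length l = k \<and> sorted (rev l) \<and> set l \<subseteq> Xs n"
  by (auto simp: Akn_def Xs_def sorted_wrt_rev)

lemma finite_Wl [simp]: "finite (Wl n k)"
  unfolding Wl_def using finite_lists_length_eq[OF finite_Xs[of n], of k] by (simp add: conj_commute)

lemma finite_Akn [simp]: "finite (Akn k n)"
  by (rule finite_subset[OF _ finite_Wl[of n k]]) (auto simp: Akn_iff Wl_def)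

lemma Akn_length: "l \<in> Akn k n \<Longrightarrow> length l = k" by (simp add: Akn_iff)

lemma Akn_unique: "l \<in> Akn k n \<Longrightarrow> m \<in> Akn k n \<Longrightarrow> mset l = mset m \<Longrightarrow> l = m"
proof -
  assume a: "l \<in> Akn k n" "m \<in> Akn k n" "mset l = mset m"
  have "sort (rev m) = rev l"
    by (rule properties_for_sort) (use a in \<open>auto simp: Akn_iff\<close>)
  moreover have "sort (rev m) = rev m" using a by (simp add: Akn_iff sorted_sort_id)
  ultimately show "l = m" by simp
qed

lemma Pm_sub_Wl: "\<nu> \<in> Akn k n \<Longrightarrow> Pm \<nu> \<subseteq> Wl n k"
proof
  fix \<beta> assume a: "\<nu> \<in> Akn k n" "\<beta> \<in> Pm \<nu>"
  then have "mset \<beta> = mset \<nu>" by (simp add: Pm_def)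
  then have "set \<beta> = set \<nu>" "length \<beta> = length \<nu>" by (metis set_mset_mset, metis size_mset)
  then show "\<beta> \<in> Wl n k" using a(1) unfolding Wl_def Akn_iff by simp
qed

lemma Wl_Union: "Wl n k = (\<Union>\<nu>\<in>Akn k n. Pm \<nu>)"
proof
  show "(\<Union>\<nu>\<in>Akn k n. Pm \<nu>) \<subseteq> Wl n k" using Pm_sub_Wl by blast
  show "Wl n k \<subseteq> (\<Union>\<nu>\<in>Akn k n. Pm \<nu>)"
  proof
    fix \<beta> assume b: "\<beta> \<in> Wl n k"
    have "rev (sort \<beta>) \<in> Akn k n" using b by (simp add: Akn_iff Wl_def)
    moreover have "\<beta> \<in> Pm (rev (sort \<beta>))" by (simp add: Pm_def)
    ultimately show "\<beta> \<in> (\<Union>\<nu>\<in>Akn k n. Pm \<nu>)" by blast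
  qed
qed

lemma Pm_disj: "\<nu> \<in> Akn k n \<Longrightarrow> \<nu>' \<in> Akn k n \<Longrightarrow> \<nu> \<noteq> \<nu>' \<Longrightarrow> Pm \<nu> \<inter> Pm \<nu>' = {}"
proof (rule ccontr)
  assume a: "\<nu> \<in> Akn k n" "\<nu>' \<in> Akn k n" "\<nu> \<noteq> \<nu>'" "Pm \<nu> \<inter> Pm \<nu>' \<noteq> {}"
  then obtain \<alpha> where "\<alpha> \<in> Pm \<nu>" "\<alpha> \<in> Pm \<nu>'" by blast
  then have "mset \<nu> = mset \<nu>'" by (simp add: Pm_def)
  then show False using Akn_unique[OF a(1,2)] a(3) by blast
qed

lemma sum_Wl: "(\<Sum>\<beta>\<in>Wl n k. h \<beta>) = (\<Sum>\<nu>\<in>Akn k n. \<Sum>\<beta>\<in>Pm \<nu>. h \<beta>)"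
  unfolding Wl_Union by (rule sum.UNION_disjoint) (simp_all add: Pm_disj)

lemma Kt_kc:
  assumes "length \<alpha> = k" "length \<gamma> = k"
  shows "Kt (kc n f g) \<alpha> \<gamma> = (\<Sum>\<beta>\<in>Wl n k. Kt f \<alpha> \<beta> * Kt g \<beta> \<gamma>)"
proof -
  have "Kt (kc n f g) \<alpha> \<gamma> = (\<Prod>j<k. \<Sum>x\<in>Xs n. f (\<alpha>!j) x * g x (\<gamma>!j))"
    using assms by (simp add: Kt_def kc_def)
  also have "\<dots> = (\<Sum>\<beta>\<in>Wl n k. \<Prod>j<k. f (\<alpha>!j) (\<beta>!j) * g (\<beta>!j) (\<gamma>!j))"
    unfolding Wl_def by (rule sum_prod_lists[symmetric]) simp
  also have "\<dots> = (\<Sum>\<beta>\<in>Wl n k. Kt f \<alpha> \<beta> * Kt g \<beta> \<gamma>)"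
    using assms by (intro sum.cong refl) (simp add: Kt_def prod.distrib Wl_def)
  finally show ?thesis .
qed

lemma sum_Pm_left:
  assumes "length \<nu> = length l"
  shows "(\<Sum>\<alpha>\<in>Pm l. \<Sum>\<beta>\<in>Pm \<nu>. Kt f \<alpha> \<beta>) = of_nat (card (Pm \<nu>)) * (\<Sum>\<alpha>\<in>Pm l. Kt f \<alpha> \<nu>)"
proof -
  have "(\<Sum>\<alpha>\<in>Pm l. \<Sum>\<beta>\<in>Pm \<nu>. Kt f \<alpha> \<beta>) = (\<Sum>\<beta>\<in>Pm \<nu>. \<Sum>\<alpha>\<in>Pm l. Kt f \<alpha> \<beta>)"
    by (rule sum.swap)
  also have "\<dots> = (\<Sum>\<beta>\<in>Pm \<nu>. \<Sum>\<alpha>\<in>Pm l. Kt f \<alpha> \<nu>)"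
    by (intro sum.cong refl sum_inv2) (use assms in \<open>auto simp: Pm_def\<close>)
  finally show ?thesis by simp
qed

lemma sum_Pm_right:
  assumes "length \<nu> = length m"
  shows "(\<Sum>\<beta>\<in>Pm \<nu>. \<Sum>\<gamma>\<in>Pm m. Kt g \<beta> \<gamma>) = of_nat (card (Pm \<nu>)) * (\<Sum>\<gamma>\<in>Pm m. Kt g \<nu> \<gamma>)"
proof -
  have "(\<Sum>\<beta>\<in>Pm \<nu>. \<Sum>\<gamma>\<in>Pm m. Kt g \<beta> \<gamma>) = (\<Sum>\<beta>\<in>Pm \<nu>. \<Sum>\<gamma>\<in>Pm m. Kt g \<nu> \<gamma>)"
    by (intro sum.cong refl sum_inv1) (use assms in \<open>auto simp: Pm_def\<close>)
  then show ?thesis by simp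
qed

lemma symm_mult:
  assumes "l \<in> Akn k n" "m \<in> Akn k n"
  shows "(\<Sum>\<nu>\<in>Akn k n. symm f l \<nu> * symm g \<nu> m) = symm (kc n f g) l m"
proof -
  define \<Phi> where "\<Phi> \<nu> = (\<Sum>\<alpha>\<in>Pm l. Kt f \<alpha> \<nu>)" for \<nu>
  define \<Psi> where "\<Psi> \<nu> = (\<Sum>\<gamma>\<in>Pm m. Kt g \<nu> \<gamma>)" for \<nu>
  have ll: "length l = k" "length m = k" using assms by (simp_all add: Akn_length)
  have lhs: "symm f l \<nu> * symm g \<nu> m = of_real (ccf l * ccf m) * (of_nat (card (Pm \<nu>)) * (\<Phi> \<nu> * \<Psi> \<nu>))"
    if "\<nu> \<in> Akn k n" for \<nu>
  proof -
    have lv: "length \<nu> = k" using that by (simp add: Akn_length)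
    have "symm f l \<nu> * symm g \<nu> m = of_real (ccf l * ccf \<nu>) * (of_nat (card (Pm \<nu>)) * \<Phi> \<nu>) *
           (of_real (ccf \<nu> * ccf m) * (of_nat (card (Pm \<nu>)) * \<Psi> \<nu>))"
    proof -
      have e1: "(\<Sum>\<alpha>\<in>Pm l. \<Sum>\<beta>\<in>Pm \<nu>. Kt f \<alpha> \<beta>) = of_nat (card (Pm \<nu>)) * \<Phi> \<nu>"
        unfolding \<Phi>_def by (rule sum_Pm_left) (use lv ll in simp)
      have e2: "(\<Sum>\<beta>\<in>Pm \<nu>. \<Sum>\<gamma>\<in>Pm m. Kt g \<beta> \<gamma>) = of_nat (card (Pm \<nu>)) * \<Psi> \<nu>"
        unfolding \<Psi>_def by (rule sum_Pm_right) (use lv ll in simp)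
      show ?thesis unfolding symm_def e1 e2 ..
    qed
    also have "\<dots> = of_real (ccf l * ccf m) * of_real (ccf \<nu> * ccf \<nu> * real (card (Pm \<nu>))) * (of_nat (card (Pm \<nu>)) * (\<Phi> \<nu> * \<Psi> \<nu>))"
      by (simp only: of_real_mult mult_ac of_real_of_nat_eq)
    also have "\<dots> = of_real (ccf l * ccf m) * (of_nat (card (Pm \<nu>)) * (\<Phi> \<nu> * \<Psi> \<nu>))"
      by (simp only: ccf_sq) simp
    finally show ?thesis .
  qed
  have "symm (kc n f g) l m = of_real (ccf l * ccf m) * (\<Sum>\<alpha>\<in>Pm l. \<Sum>\<gamma>\<in>Pm m. \<Sum>\<beta>\<in>Wl n k. Kt f \<alpha> \<beta> * Kt g \<beta> \<gamma>)"
  proof -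
    have "Kt (kc n f g) \<alpha> \<gamma> = (\<Sum>\<beta>\<in>Wl n k. Kt f \<alpha> \<beta> * Kt g \<beta> \<gamma>)" if "\<alpha> \<in> Pm l" "\<gamma> \<in> Pm m" for \<alpha> \<gamma>
      by (rule Kt_kc) (use that ll Pm_length in auto)
    then show ?thesis unfolding symm_def by simp
  qed
  moreover have "(\<Sum>\<alpha>\<in>Pm l. \<Sum>\<gamma>\<in>Pm m. \<Sum>\<beta>\<in>Wl n k. Kt f \<alpha> \<beta> * Kt g \<beta> \<gamma>) = (\<Sum>\<beta>\<in>Wl n k. (\<Sum>\<alpha>\<in>Pm l. Kt f \<alpha> \<beta>) * (\<Sum>\<gamma>\<in>Pm m. Kt g \<beta> \<gamma>))"
  proof -
    have "(\<Sum>\<alpha>\<in>Pm l. \<Sum>\<gamma>\<in>Pm m. \<Sum>\<beta>\<in>Wl n k. Kt f \<alpha> \<beta> * Kt g \<beta> \<gamma>) = (\<Sum>\<alpha>\<in>Pm l. \<Sum>\<beta>\<in>Wl n k. \<Sum>\<gamma>\<in>Pm m. Kt f \<alpha> \<beta> * Kt g \<beta> \<gamma>)"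
      by (rule sum.cong[OF refl], rule sum.swap)
    also have "\<dots> = (\<Sum>\<beta>\<in>Wl n k. \<Sum>\<alpha>\<in>Pm l. \<Sum>\<gamma>\<in>Pm m. Kt f \<alpha> \<beta> * Kt g \<beta> \<gamma>)"
      by (rule sum.swap)
    also have "\<dots> = (\<Sum>\<beta>\<in>Wl n k. (\<Sum>\<alpha>\<in>Pm l. Kt f \<alpha> \<beta>) * (\<Sum>\<gamma>\<in>Pm m. Kt g \<beta> \<gamma>))"
      by (subst sum_product, rule sum.cong[OF refl], rule sum.cong[OF refl], rule refl)
    finally show ?thesis .
  qed
  moreover have "(\<Sum>\<beta>\<in>Wl n k. (\<Sum>\<alpha>\<in>Pm l. Kt f \<alpha> \<beta>) * (\<Sum>\<gamma>\<in>Pm m. Kt g \<beta> \<gamma>)) = (\<Sum>\<nu>\<in>Akn k n. \<Sum>\<beta>\<in>Pm \<nu>. (\<Sum>\<alpha>\<in>Pm l. Kt f \<alpha> \<beta>) * (\<Sum>\<gamma>\<in>Pm m. Kt g \<beta> \<gamma>))"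
    by (rule sum_Wl)
  moreover have "(\<Sum>\<nu>\<in>Akn k n. \<Sum>\<beta>\<in>Pm \<nu>. (\<Sum>\<alpha>\<in>Pm l. Kt f \<alpha> \<beta>) * (\<Sum>\<gamma>\<in>Pm m. Kt g \<beta> \<gamma>)) = (\<Sum>\<nu>\<in>Akn k n. of_nat (card (Pm \<nu>)) * (\<Phi> \<nu> * \<Psi> \<nu>))"
  proof (intro sum.cong refl)
    fix \<nu> assume v: "\<nu> \<in> Akn k n"
    have lv: "length \<nu> = k" using v by (simp add: Akn_length)
    have "(\<Sum>\<beta>\<in>Pm \<nu>. (\<Sum>\<alpha>\<in>Pm l. Kt f \<alpha> \<beta>) * (\<Sum>\<gamma>\<in>Pm m. Kt g \<beta> \<gamma>)) = (\<Sum>\<beta>\<in>Pm \<nu>. \<Phi> \<nu> * \<Psi> \<nu>)"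
    proof (rule sum.cong[OF refl])
      fix \<beta> assume b: "\<beta> \<in> Pm \<nu>"
      have "(\<Sum>\<alpha>\<in>Pm l. Kt f \<alpha> \<beta>) = \<Phi> \<nu>" unfolding \<Phi>_def
        by (rule sum_inv2) (use b lv ll in \<open>auto simp: Pm_def\<close>)
      moreover have "(\<Sum>\<gamma>\<in>Pm m. Kt g \<beta> \<gamma>) = \<Psi> \<nu>" unfolding \<Psi>_def
        by (rule sum_inv1) (use b lv ll in \<open>auto simp: Pm_def\<close>)
      ultimately show "(\<Sum>\<alpha>\<in>Pm l. Kt f \<alpha> \<beta>) * (\<Sum>\<gamma>\<in>Pm m. Kt g \<beta> \<gamma>) = \<Phi> \<nu> * \<Psi> \<nu>" by simp
    qed
    then show "(\<Sum>\<beta>\<in>Pm \<nu>. (\<Sum>\<alpha>\<in>Pm l. Kt f \<alpha> \<beta>) * (\<Sum>\<gamma>\<in>Pm m. Kt g \<beta> \<gamma>)) = of_nat (card (Pm \<nu>)) * (\<Phi> \<nu> * \<Psi> \<nu>)"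
      by simp
  qed
  ultimately have R: "symm (kc n f g) l m = of_real (ccf l * ccf m) * (\<Sum>\<nu>\<in>Akn k n. of_nat (card (Pm \<nu>)) * (\<Phi> \<nu> * \<Psi> \<nu>))"
    by (simp only:)
  have "(\<Sum>\<nu>\<in>Akn k n. symm f l \<nu> * symm g \<nu> m) = (\<Sum>\<nu>\<in>Akn k n. of_real (ccf l * ccf m) * (of_nat (card (Pm \<nu>)) * (\<Phi> \<nu> * \<Psi> \<nu>)))"
    by (rule sum.cong[OF refl lhs])
  also have "\<dots> = of_real (ccf l * ccf m) * (\<Sum>\<nu>\<in>Akn k n. of_nat (card (Pm \<nu>)) * (\<Phi> \<nu> * \<Psi> \<nu>))"
    by (rule sum_distrib_left[symmetric])
  finally show ?thesis unfolding R .
qed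


definition diagk :: "(int \<Rightarrow> complex) \<Rightarrow> int \<Rightarrow> int \<Rightarrow> complex" where
  "diagk \<tau> a b = (if a = b then \<tau> a else 0)"

lemma prod_nth_mset: "(\<Prod>j<length xs. f (xs!j)) = prod_mset (image_mset f (mset xs))"
proof (induction xs)
  case Nil then show ?case by simp
next
  case (Cons x xs)
  then show ?case by (simp add: prod.lessThan_Suc_shift del: prod.lessThan_Suc)
qed

lemma prod_inv: "mset \<alpha> = mset l \<Longrightarrow> (\<Prod>j<length \<alpha>. f (\<alpha>!j)) = (\<Prod>j<length l. f (l!j))"
  by (simp add: prod_nth_mset)

lemma Kt_diag: "length \<beta> = length \<alpha> \<Longrightarrow> Kt (diagk \<tau>) \<alpha> \<beta> = (if \<alpha> = \<beta> then (\<Prod>j<length \<alpha>. \<tau> (\<alpha>!j)) else 0)"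
proof (cases "\<alpha> = \<beta>")
  case True then show ?thesis by (simp add: Kt_def diagk_def)
next
  case False
  assume l: "length \<beta> = length \<alpha>"
  then obtain j where j: "j < length \<alpha>" "\<alpha>!j \<noteq> \<beta>!j" using False nth_equalityI by metis
  then have "Kt (diagk \<tau>) \<alpha> \<beta> = 0" unfolding Kt_def
    by (intro prod_zero bexI[of _ j]) (auto simp: diagk_def)
  then show ?thesis using False by simp
qed

lemma symm_diag:
  assumes "l \<in> Akn k n" "m \<in> Akn k n"
  shows "symm (diagk \<tau>) l m = (if l = m then (\<Prod>j<k. \<tau> (l!j)) else 0)"
proof -
  have ll: "length l = k" "length m = k" using assms by (simp_all add: Akn_length)
  have inner: "(\<Sum>\<beta>\<in>Pm m. Kt (diagk \<tau>) \<alpha> \<beta>) = (if \<alpha> \<in> Pm m then (\<Prod>j<k. \<tau> (\<alpha>!j)) else 0)"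
    if a: "\<alpha> \<in> Pm l" for \<alpha>
  proof -
    have la: "length \<alpha> = k" using a ll Pm_length by simp
    have "(\<Sum>\<beta>\<in>Pm m. Kt (diagk \<tau>) \<alpha> \<beta>) = (\<Sum>\<beta>\<in>Pm m. if \<alpha> = \<beta> then (\<Prod>j<k. \<tau> (\<alpha>!j)) else 0)"
      by (intro sum.cong refl) (use la ll Pm_length Kt_diag in simp)
    also have "\<dots> = (if \<alpha> \<in> Pm m then (\<Prod>j<k. \<tau> (\<alpha>!j)) else 0)"
      by (simp add: sum.delta)
    finally show ?thesis .
  qed
  show ?thesis
  proof (cases "l = m")
    case True
    have "(\<Sum>\<alpha>\<in>Pm l. \<Sum>\<beta>\<in>Pm m. Kt (diagk \<tau>) \<alpha> \<beta>) = (\<Sum>\<alpha>\<in>Pm l. (\<Prod>j<k. \<tau> (l!j)))"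
    proof (rule sum.cong[OF refl])
      fix \<alpha> assume a: "\<alpha> \<in> Pm l"
      have "mset \<alpha> = mset l" using a by (simp add: Pm_def)
      moreover have "length \<alpha> = k" using a ll Pm_length by simp
      ultimately show "(\<Sum>\<beta>\<in>Pm m. Kt (diagk \<tau>) \<alpha> \<beta>) = (\<Prod>j<k. \<tau> (l!j))"
        using inner[OF a] True a ll prod_inv[of \<alpha> l \<tau>] by simp
    qed
    also have "\<dots> = of_nat (card (Pm l)) * (\<Prod>j<k. \<tau> (l!j))" by simp
    finally have "symm (diagk \<tau>) l m = of_real (ccf l * ccf l * real (card (Pm l))) * (\<Prod>j<k. \<tau> (l!j))"
      unfolding symm_def using True by simp
    then show ?thesis using True by (simp only: ccf_sq) simp
  next
    case False
    have "(\<Sum>\<alpha>\<in>Pm l. \<Sum>\<beta>\<in>Pm m. Kt (diagk \<tau>) \<alpha> \<beta>) = 0"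
    proof (rule sum.neutral, rule ballI)
      fix \<alpha> assume a: "\<alpha> \<in> Pm l"
      have "\<alpha> \<notin> Pm m" using Pm_disj[OF assms False] a by blast
      then show "(\<Sum>\<beta>\<in>Pm m. Kt (diagk \<tau>) \<alpha> \<beta>) = 0" using inner[OF a] by simp
    qed
    then show ?thesis using False by (simp add: symm_def)
  qed
qed

lemma Idmat_symm: "l \<in> Akn k n \<Longrightarrow> m \<in> Akn k n \<Longrightarrow> Idmat l m = symm (diagk (\<lambda>_. 1)) l m"
  by (simp add: symm_diag Idmat_def)

lemma zeta_add: "zeta n (a + b) = zeta n a * zeta n b"
  by (simp add: zeta_def distrib_left add_divide_distrib exp_add)

lemma zeta_pow: "zeta n q ^ e = zeta n (real e * q)"
  unfolding zeta_def exp_of_nat_mult[symmetric] by (simp add: algebra_simps)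

lemma zeta_0 [simp]: "zeta n 0 = 1" by (simp add: zeta_def)

lemma zeta_prod: "(\<Prod>j\<in>J. zeta n (f j)) = zeta n (\<Sum>j\<in>J. f j)"
  by (induction J rule: infinite_finite_induct) (simp_all add: zeta_add)

definition ztau :: "nat \<Rightarrow> int \<Rightarrow> complex" where
  "ztau n a = zeta n (- (real n * (real n - 1) / 24)) * zeta n (of_int (a * (int n - a)) / 2)"

lemma Tmat_symm:
  assumes "l \<in> Akn k n" "m \<in> Akn k n"
  shows "Tmat k n l m = symm (diagk (ztau n)) l m"
proof -
  have "(\<Prod>j<k. ztau n (l!j)) = zeta n (- (real k * real n * (real n - 1) / 24)) * (\<Prod>i<k. zeta n (of_int (l ! i * (int n - l ! i)) / 2))"
  proof -
    have "(\<Prod>j<k. ztau n (l!j)) = (\<Prod>j<k. zeta n (- (real n * (real n - 1) / 24))) * (\<Prod>i<k. zeta n (of_int (l ! i * (int n - l ! i)) / 2))"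
      by (simp add: ztau_def prod.distrib)
    also have "(\<Prod>j<k. zeta n (- (real n * (real n - 1) / 24))) = zeta n (- (real k * real n * (real n - 1) / 24))"
    proof -
      have "(\<Prod>j<k. zeta n (- (real n * (real n - 1) / 24))) = zeta n (- (real n * (real n - 1) / 24)) ^ k"
        by simp
      also have "\<dots> = zeta n (real k * (- (real n * (real n - 1) / 24)))" by (rule zeta_pow)
      finally show ?thesis by (simp add: algebra_simps)
    qed
    finally show ?thesis .
  qed
  note e = this
  show ?thesis
  proof (cases "l = m")
    case True
    then show ?thesis using assms e by (simp add: symm_diag Tmat_def)
  next
    case False
    then show ?thesis using assms by (simp add: symm_diag Tmat_def)
  qed
qed


definition zF :: "nat \<Rightarrow> int \<Rightarrow> int \<Rightarrow> complex" where
  "zF n a b = zeta n (of_int (a * b)) / of_real (sqrt n)"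

lemma card_stab: "card (Pm l) * stab_card l = fact (length l)"
  using card_permutations_of_multiset_aux[of "mset l"]
  by (simp add: Pm_eq stab_card_def)

lemma Pm_pos: "l \<in> Akn k n \<Longrightarrow> \<alpha> \<in> Pm l \<Longrightarrow> j < length \<alpha> \<Longrightarrow> 0 < \<alpha>!j"
proof -
  assume a: "l \<in> Akn k n" "\<alpha> \<in> Pm l" "j < length \<alpha>"
  then have "\<alpha>!j \<in> set l" by (metis Pm_def mem_Collect_eq nth_mem set_mset_mset)
  then show ?thesis using a(1) by (auto simp: Akn_def)
qed

lemma monomial_Kt:
  assumes "l \<in> Akn k n" "m \<in> Akn k n" "0 < n"
  shows "monomial_sym l (\<lambda>j. zeta n (of_int (m ! j))) = of_real (sqrt n ^ k) * (\<Sum>\<alpha>\<in>Pm l. Kt (zF n) \<alpha> m)"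
proof -
  have ll: "length l = k" using assms by (simp add: Akn_length)
  have sn: "of_real (sqrt (real n)) \<noteq> (0::complex)" using assms by simp
  have "(\<Prod>j<k. zeta n (of_int (m ! j)) ^ nat (\<alpha> ! j)) = of_real (sqrt n ^ k) * Kt (zF n) \<alpha> m"
    if a: "\<alpha> \<in> Pm l" for \<alpha>
  proof -
    have la: "length \<alpha> = k" using a ll Pm_length by simp
    have "zeta n (of_int (m ! j)) ^ nat (\<alpha> ! j) = of_real (sqrt n) * zF n (\<alpha>!j) (m!j)" if j: "j < k" for j
    proof -
      have p: "0 < \<alpha>!j" using Pm_pos[OF assms(1) a] j la by simp
      have "zeta n (of_int (m ! j)) ^ nat (\<alpha> ! j) = zeta n (real (nat (\<alpha>!j)) * of_int (m!j))" by (rule zeta_pow)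
      also have "real (nat (\<alpha>!j)) * of_int (m!j) = of_int (\<alpha>!j * m!j)" using p by simp
      finally show ?thesis using sn by (simp add: zF_def)
    qed
    then have "(\<Prod>j<k. zeta n (of_int (m ! j)) ^ nat (\<alpha> ! j)) = (\<Prod>j<k. of_real (sqrt n) * zF n (\<alpha>!j) (m!j))"
      by (intro prod.cong refl) simp
    also have "\<dots> = of_real (sqrt n ^ k) * Kt (zF n) \<alpha> m"
      by (simp add: prod.distrib Kt_def la)
    finally show ?thesis .
  qed
  then have "monomial_sym l (\<lambda>j. zeta n (of_int (m ! j))) = (\<Sum>\<alpha>\<in>Pm l. of_real (sqrt n ^ k) * Kt (zF n) \<alpha> m)"
    unfolding monomial_sym_def ll by (intro sum.cong) (auto simp: Pm_def)
  then show ?thesis by (simp add: sum_distrib_left)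
qed

lemma Smat_symm:
  assumes "l \<in> Akn k n" "m \<in> Akn k n" "0 < n"
  shows "Smat k n l m = symm (zF n) l m"
proof -
  have ll: "length l = k" "length m = k" using assms by (simp_all add: Akn_length)
  define a where "a = real (card (Pm l))"
  define b where "b = real (card (Pm m))"
  define s where "s = real (stab_card l)"
  define t where "t = real (stab_card m)"
  have ab: "0 < a" "0 < b" using card_Pm_pos by (auto simp: a_def b_def)
  have as: "a * s = fact k" "b * t = fact k"
    using card_stab[of l] card_stab[of m] ll unfolding a_def b_def s_def t_def by (metis of_nat_fact of_nat_mult)+
  have st: "s / t = b / a"
  proof -
    have f0: "(fact k :: real) \<noteq> 0" by simp
    have t0: "t \<noteq> 0" using as(2) f0 by auto
    have "s * a = b * t" using as by (simp add: mult.commute)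
    then show ?thesis using ab t0 by (simp add: divide_eq_eq eq_divide_eq)
  qed
  have key: "sqrt (s / t) = ccf l * ccf m * b"
    unfolding st ccf_def a_def[symmetric] b_def[symmetric] using ab
    by (simp add: real_sqrt_divide field_simps)
  have sn: "sqrt (real n) ^ k \<noteq> 0" using assms by simp
  have "Smat k n l m = of_real (sqrt (s / t)) * (\<Sum>\<alpha>\<in>Pm l. Kt (zF n) \<alpha> m)"
    unfolding Smat_def monomial_Kt[OF assms] s_def t_def using sn assms(3) by simp
  also have "\<dots> = symm (zF n) l m"
    unfolding symm_def key sum_Pm_left[of m l, OF ll(2)[folded ll(1)]] b_def by simp
  finally show ?thesis .
qed

lemma cnj_zeta: "cnj (zeta n q) = zeta n (- q)"
  by (simp add: zeta_def exp_cnj)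

lemma ctrans_symm:
  assumes "l \<in> Akn k n" "m \<in> Akn k n"
  shows "cnj (symm f m l) = symm (\<lambda>a b. cnj (f b a)) l m"
proof -
  have ll: "length l = k" "length m = k" using assms by (simp_all add: Akn_length)
  have "cnj (symm f m l) = of_real (ccf m * ccf l) * (\<Sum>\<alpha>\<in>Pm m. \<Sum>\<beta>\<in>Pm l. cnj (Kt f \<alpha> \<beta>))"
    by (simp add: symm_def)
  also have "(\<Sum>\<alpha>\<in>Pm m. \<Sum>\<beta>\<in>Pm l. cnj (Kt f \<alpha> \<beta>)) = (\<Sum>\<beta>\<in>Pm l. \<Sum>\<alpha>\<in>Pm m. cnj (Kt f \<alpha> \<beta>))"
    by (rule sum.swap)
  also have "\<dots> = (\<Sum>\<beta>\<in>Pm l. \<Sum>\<alpha>\<in>Pm m. Kt (\<lambda>a b. cnj (f b a)) \<beta> \<alpha>)"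
  proof (rule sum.cong[OF refl], rule sum.cong[OF refl])
    fix \<alpha> \<beta> assume "\<beta> \<in> Pm l" "\<alpha> \<in> Pm m"
    then have "length \<alpha> = k" "length \<beta> = k" using ll Pm_length by auto
    then show "cnj (Kt f \<alpha> \<beta>) = Kt (\<lambda>a b. cnj (f b a)) \<beta> \<alpha>" by (simp add: Kt_def)
  qed
  finally show ?thesis by (simp add: symm_def mult.commute)
qed

definition zFs :: "nat \<Rightarrow> int \<Rightarrow> int \<Rightarrow> complex" where
  "zFs n a b = zeta n (- of_int (a * b)) / of_real (sqrt n)"

lemma zFs_eq: "(\<lambda>a b. cnj (zF n b a)) = zFs n"
  by (intro ext) (simp add: zF_def zFs_def cnj_zeta mult.commute)

lemma ctrans_Smat:
  assumes "l \<in> Akn k n" "m \<in> Akn k n" "0 < n"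
  shows "ctrans (Smat k n) l m = symm (zFs n) l m"
  unfolding ctrans_def Smat_symm[OF assms(2,1,3)] ctrans_symm[OF assms(1,2)] zFs_eq ..


definition negn :: "nat \<Rightarrow> int \<Rightarrow> int" where "negn n a = (if a = int n then int n else int n - a)"

lemma neg_mod_aux:
  fixes x k :: int
  assumes "-k \<le> x" "x < 0"
  shows "x mod k = x + k" "x div k = -1"
proof -
  have k: "0 < k" using assms by simp
  have "(x + k) mod k = x + k" by (rule mod_pos_pos_trivial) (use assms in auto)
  then show "x mod k = x + k" by simp
  have "(x + k) div k = 0" by (rule div_pos_pos_trivial) (use assms in auto)
  then show "x div k = -1" using k by (simp add: div_add_self2)
qed

lemma pos_mod_aux:
  fixes x k :: int
  assumes "0 \<le> x" "x < k"
  shows "x mod k = x" "x div k = 0"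
  using assms by (simp_all add: mod_pos_pos_trivial div_pos_pos_trivial)

lemma decomp_n:
  assumes "m \<in> Akn k n"
  obtains q rest where "m = replicate q (int n) @ rest" "\<forall>x\<in>set rest. x < int n" "\<forall>x\<in>set rest. 0 < x"
    "sorted (rev rest)"
proof -
  define q where "q = length (takeWhile (\<lambda>x. x = int n) m)"
  define rest where "rest = dropWhile (\<lambda>x. x = int n) m"
  have tw: "takeWhile (\<lambda>x. x = int n) m = replicate q (int n)"
    unfolding q_def by (rule replicate_length_same[symmetric]) (auto dest: set_takeWhileD)
  have m: "m = replicate q (int n) @ rest" using takeWhile_dropWhile_id[of "\<lambda>x. x = int n" m] tw rest_def by simp
  have sm1: "sorted (rev m)" using assms by (simp add: Akn_iff)
  have sm2: "\<forall>x\<in>set m. 0 < x \<and> x \<le> int n" using assms by (auto simp: Akn_def)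
  note sm = sm1 sm2
  have sr: "sorted (rev rest)" using sm(1) m by (simp add: sorted_append)
  have lt: "\<forall>x\<in>set rest. x < int n"
  proof (cases rest)
    case Nil then show ?thesis by simp
  next
    case (Cons h t)
    have "rest \<noteq> []" using Cons by simp
    then have "\<not> (hd rest = int n)" using hd_dropWhile[of "\<lambda>x. x = int n" m] rest_def by simp
    then have "h \<noteq> int n" using Cons by simp
    moreover have "h \<le> int n" using sm(2) m Cons by auto
    ultimately have h: "h < int n" by simp
    have "\<forall>x\<in>set t. x \<le> h" using sr Cons by (simp add: sorted_append)
    then show ?thesis using h Cons by auto
  qed
  have pos: "\<forall>x\<in>set rest. 0 < x" using sm(2) m by auto
  show ?thesis using that m lt pos sr by blast
qed

lemma pstar_form:
  assumes "m = replicate q (int n) @ rest" "\<forall>x\<in>set rest. x < int n"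
  shows "pstar n m = replicate q (int n) @ rev (map (\<lambda>x. int n - x) rest)"
proof -
  define k where "k = length m"
  define rho where "rho = map (\<lambda>x. int n - x) (rev m)"
  have cnt: "count (mset m) (int n) = q" using assms by (auto simp: count_eq_zero_iff)
  have lr: "length rho = k" by (simp add: rho_def k_def)
  have kq: "k = q + length rest" using assms by (simp add: k_def)
  have ps: "pstar n m = map (\<lambda>i. ext n rho (int i - int q)) [1..<k + 1]"
    by (simp only: pstar_def Let_def cnt rho_def k_def)
  show ?thesis
  proof (rule nth_equalityI)
    show "length (pstar n m) = length (replicate q (int n) @ rev (map (\<lambda>x. int n - x) rest))"
      by (simp add: ps kq del: upt_Suc)
  next
    fix p assume "p < length (pstar n m)"
    then have p: "p < k" by (simp add: ps del: upt_Suc)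
    have lhs: "pstar n m ! p = ext n rho (int p + 1 - int q)"
      using p by (simp add: ps nth_map_upt algebra_simps del: upt_Suc)
    show "pstar n m ! p = (replicate q (int n) @ rev (map (\<lambda>x. int n - x) rest)) ! p"
    proof (cases "p < q")
      case True
      define x where "x = int p - int q"
      have x: "- int k \<le> x" "x < 0" using True kq by (auto simp: x_def)
      have e: "ext n rho (int p + 1 - int q) = rho ! nat (x + int k) + int n"
      proof -
        have "int p + 1 - int q - 1 = x" by (simp add: x_def)
        then show ?thesis unfolding ext_def lr by (simp only: neg_mod_aux[OF x])
      qed
      have i: "nat (x + int k) = p + k - q" using True kq by (simp add: x_def)
      have "rho ! (p + k - q) = int n - m ! (q - Suc p)"
        using True kq by (simp add: rho_def rev_nth k_def)
      moreover have "m ! (q - Suc p) = int n" using True assms(1) by (simp add: nth_append)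
      ultimately show ?thesis using lhs e i True by (simp add: nth_append)
    next
      case False
      define x where "x = int p - int q"
      have x: "0 \<le> x" "x < int k" using False p by (auto simp: x_def)
      have e: "ext n rho (int p + 1 - int q) = rho ! nat x"
      proof -
        have "int p + 1 - int q - 1 = x" by (simp add: x_def)
        then show ?thesis unfolding ext_def lr by (simp only: pos_mod_aux[OF x])
      qed
      have i: "nat x = p - q" using False by (simp add: x_def)
      have "rho ! (p - q) = int n - m ! (k - Suc (p - q))"
        using False p by (simp add: rho_def rev_nth k_def)
      moreover have "m ! (k - Suc (p - q)) = rest ! (length rest - Suc (p - q))"
      proof -
        have idx: "k - Suc (p - q) = length (replicate q (int n)) + (length rest - Suc (p - q))"
          using False p kq by simp
        show ?thesis unfolding idx assms(1) by (rule nth_append_length_plus)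
      qed
      moreover have "(replicate q (int n) @ rev (map (\<lambda>x. int n - x) rest)) ! p = int n - rest ! (length rest - Suc (p - q))"
        using False p kq by (simp add: nth_append rev_nth)
      ultimately show ?thesis using lhs e i by simp
    qed
  qed
qed

lemma pstar_props:
  assumes "m \<in> Akn k n"
  shows "pstar n m \<in> Akn k n" "mset (pstar n m) = image_mset (negn n) (mset m)"
proof -
  obtain q rest where qr: "m = replicate q (int n) @ rest" "\<forall>x\<in>set rest. x < int n" "\<forall>x\<in>set rest. 0 < x"
    "sorted (rev rest)" using decomp_n[OF assms] by blast
  have ps: "pstar n m = replicate q (int n) @ rev (map (\<lambda>x. int n - x) rest)"
    using pstar_form[OF qr(1,2)] .
  have lm: "length m = k" using assms by (simp add: Akn_length)
  have "sorted (map (\<lambda>x. int n - x) rest)"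
    using qr(4) by (simp add: sorted_wrt_map sorted_wrt_rev)
  moreover have "\<forall>x\<in>set rest. 1 \<le> int n - x \<and> int n - x \<le> int n" using qr by auto
  moreover have "q > 0 \<Longrightarrow> 1 \<le> int n"
  proof -
    assume "q > 0"
    then have "int n \<in> set m" using qr(1) by simp
    then show ?thesis using assms by (auto simp: Akn_def)
  qed
  ultimately show "pstar n m \<in> Akn k n"
    unfolding Akn_iff ps using lm qr by (auto simp: Xs_def sorted_append)
  have "image_mset (negn n) (mset m) = replicate_mset q (int n) + image_mset (\<lambda>x. int n - x) (mset rest)"
    using qr(1,2) by (auto simp: negn_def intro!: image_mset_cong)
  then show "mset (pstar n m) = image_mset (negn n) (mset m)" by (simp add: ps)
qed


definition zC :: "nat \<Rightarrow> int \<Rightarrow> int \<Rightarrow> complex" where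
  "zC n a b = (if (a + b) mod int n = 0 then 1 else 0)"

lemma negn_Xs: "a \<in> Xs n \<Longrightarrow> negn n a \<in> Xs n"
  by (auto simp: negn_def Xs_def)

lemma negn_negn: "a \<in> Xs n \<Longrightarrow> negn n (negn n a) = a"
  by (auto simp: negn_def Xs_def)

lemma zC_iff:
  assumes "a \<in> Xs n" "b \<in> Xs n"
  shows "(a + b) mod int n = 0 \<longleftrightarrow> b = negn n a"
proof -
  have ab: "1 \<le> a" "a \<le> int n" "1 \<le> b" "b \<le> int n" using assms by (auto simp: Xs_def)
  show ?thesis
  proof (cases "a + b < int n")
    case True
    then have "(a + b) mod int n = a + b" using ab by (intro mod_pos_pos_trivial) auto
    then show ?thesis using True ab by (auto simp: negn_def)
  next
    case False
    have "(a + b) mod int n = (a + b - int n) mod int n" by (simp add: mod_diff_right_eq[symmetric])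
    also have "\<dots> = (if a + b = 2 * int n then 0 else a + b - int n)"
    proof (cases "a + b = 2 * int n")
      case True then show ?thesis by simp
    next
      case F2: False
      then have "(a + b - int n) mod int n = a + b - int n" using False ab by (intro mod_pos_pos_trivial) auto
      then show ?thesis using F2 by simp
    qed
    finally show ?thesis using False ab by (auto simp: negn_def)
  qed
qed

lemma Kt_zC:
  assumes "length \<alpha> = k" "length \<beta> = k" "set \<alpha> \<subseteq> Xs n" "set \<beta> \<subseteq> Xs n"
  shows "Kt (zC n) \<alpha> \<beta> = (if \<beta> = map (negn n) \<alpha> then 1 else 0)"
proof (cases "\<beta> = map (negn n) \<alpha>")
  case True
  have "zC n (\<alpha>!j) (\<beta>!j) = 1" if "j < k" for j
  proof -
    have "\<alpha>!j \<in> Xs n" "\<beta>!j \<in> Xs n" using that assms nth_mem[of j \<alpha>] nth_mem[of j \<beta>] by auto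
    moreover have "\<beta>!j = negn n (\<alpha>!j)" using True that assms by simp
    ultimately show ?thesis using zC_iff by (simp add: zC_def)
  qed
  then show ?thesis using True assms by (simp add: Kt_def)
next
  case False
  then obtain j where j: "j < k" "\<beta>!j \<noteq> negn n (\<alpha>!j)"
    using assms nth_equalityI[of \<beta> "map (negn n) \<alpha>"] by auto
  have "\<alpha>!j \<in> Xs n" "\<beta>!j \<in> Xs n" using j assms nth_mem[of j \<alpha>] nth_mem[of j \<beta>] by auto
  then have "zC n (\<alpha>!j) (\<beta>!j) = 0" using zC_iff j by (simp add: zC_def)
  then have "Kt (zC n) \<alpha> \<beta> = 0" unfolding Kt_def using j assms by (intro prod_zero) auto
  then show ?thesis using False by simp
qed

lemma Pm_set: "\<alpha> \<in> Pm l \<Longrightarrow> set \<alpha> = set l"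
  unfolding Pm_def by (metis mem_Collect_eq set_mset_mset)

lemma image_neg_neg: "set l \<subseteq> Xs n \<Longrightarrow> image_mset (negn n) (image_mset (negn n) (mset l)) = mset l"
  by (simp add: image_mset.compositionality) (metis (no_types, lifting) comp_apply image_mset_cong image_mset_id id_apply negn_negn set_mset_mset subsetD)

lemma symm_zC:
  assumes "l \<in> Akn k n" "m \<in> Akn k n"
  shows "symm (zC n) l m = (if image_mset (negn n) (mset l) = mset m then 1 else 0)"
proof -
  have ll: "length l = k" "length m = k" "set l \<subseteq> Xs n" "set m \<subseteq> Xs n" using assms by (auto simp: Akn_iff)
  define c where "c = (image_mset (negn n) (mset l) = mset m)"
  have inner: "(\<Sum>\<beta>\<in>Pm m. Kt (zC n) \<alpha> \<beta>) = (if c then 1 else 0)" if a: "\<alpha> \<in> Pm l" for \<alpha>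
  proof -
    have la: "length \<alpha> = k" "set \<alpha> \<subseteq> Xs n" using a ll Pm_length Pm_set by auto
    have "(\<Sum>\<beta>\<in>Pm m. Kt (zC n) \<alpha> \<beta>) = (\<Sum>\<beta>\<in>Pm m. if \<beta> = map (negn n) \<alpha> then 1 else 0)"
    proof (rule sum.cong[OF refl])
      fix \<beta> assume b: "\<beta> \<in> Pm m"
      have "length \<beta> = k" "set \<beta> \<subseteq> Xs n" using b ll Pm_length Pm_set by auto
      then show "Kt (zC n) \<alpha> \<beta> = (if \<beta> = map (negn n) \<alpha> then 1 else 0)" using Kt_zC la by simp
    qed
    also have "\<dots> = (if map (negn n) \<alpha> \<in> Pm m then 1 else 0)" by (simp add: sum.delta)
    also have "(map (negn n) \<alpha> \<in> Pm m) = c" using a by (simp add: Pm_def c_def)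
    finally show ?thesis .
  qed
  have ss: "(\<Sum>\<alpha>\<in>Pm l. \<Sum>\<beta>\<in>Pm m. Kt (zC n) \<alpha> \<beta>) = of_nat (card (Pm l)) * (if c then 1 else 0)"
    using inner by simp
  show ?thesis
  proof (cases c)
    case False then show ?thesis using ss by (simp add: symm_def c_def)
  next
    case True
    have img: "Pm m = map (negn n) ` Pm l"
    proof
      show "map (negn n) ` Pm l \<subseteq> Pm m" using True by (auto simp: Pm_def c_def)
      show "Pm m \<subseteq> map (negn n) ` Pm l"
      proof
        fix \<gamma> assume g: "\<gamma> \<in> Pm m"
        have gs: "set \<gamma> \<subseteq> Xs n" using g Pm_set ll by auto
        have "map (negn n) (map (negn n) \<gamma>) = \<gamma>" using gs negn_negn by (auto intro!: map_idI)
        moreover have "map (negn n) \<gamma> \<in> Pm l"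
          using g True image_neg_neg[OF ll(3)] by (simp add: Pm_def c_def)
        ultimately show "\<gamma> \<in> map (negn n) ` Pm l" by (metis image_eqI)
      qed
    qed
    have inj: "inj_on (map (negn n)) (Pm l)"
    proof (rule inj_onI)
      fix x y assume "x \<in> Pm l" "y \<in> Pm l" "map (negn n) x = map (negn n) y"
      then have "map (negn n) (map (negn n) x) = map (negn n) (map (negn n) y)" by simp
      moreover have "map (negn n) (map (negn n) x) = x" "map (negn n) (map (negn n) y) = y"
        using \<open>x \<in> Pm l\<close> \<open>y \<in> Pm l\<close> Pm_set ll negn_negn by (auto intro!: map_idI)
      ultimately show "x = y" by simp
    qed
    have "card (Pm m) = card (Pm l)" unfolding img using card_image[OF inj] .
    then have "ccf m = ccf l" by (simp add: ccf_def)
    then have "symm (zC n) l m = of_real (ccf l * ccf l * real (card (Pm l)))"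
      using ss True by (simp add: symm_def)
    then show ?thesis using True by (simp only: ccf_sq c_def) simp
  qed
qed

lemma Cmat_symm:
  assumes "l \<in> Akn k n" "m \<in> Akn k n"
  shows "Cmat n l m = symm (zC n) l m"
proof -
  have ll: "set l \<subseteq> Xs n" "set m \<subseteq> Xs n" using assms by (auto simp: Akn_iff)
  have "l = pstar n m \<longleftrightarrow> image_mset (negn n) (mset l) = mset m"
  proof
    assume "l = pstar n m"
    then have "mset l = image_mset (negn n) (mset m)" using pstar_props[OF assms(2)] by simp
    then show "image_mset (negn n) (mset l) = mset m" using image_neg_neg[OF ll(2)] by simp
  next
    assume "image_mset (negn n) (mset l) = mset m"
    then have "mset (pstar n m) = mset l" using pstar_props(2)[OF assms(2)] image_neg_neg[OF ll(1)] by simp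
    then show "l = pstar n m" using Akn_unique[OF assms(1) pstar_props(1)[OF assms(2)]] by simp
  qed
  then show ?thesis using symm_zC[OF assms] by (simp add: Cmat_def)
qed


lemma zeta_int_mult: "0 < n \<Longrightarrow> zeta n (real n * real_of_int j) = 1"
proof -
  assume n: "0 < n"
  have "2 * of_real pi * \<i> * complex_of_real (real n * real_of_int j) / of_nat n = \<i> * (of_int j * (of_real pi * 2))"
    using n by (simp add: field_simps)
  then show ?thesis unfolding zeta_def by simp
qed

lemma zeta_per: "0 < n \<Longrightarrow> zeta n (q + real n * real_of_int j) = zeta n q"
  by (simp add: zeta_add zeta_int_mult)

lemma zeta_eq_1_iff: "0 < n \<Longrightarrow> zeta n (of_int d) = 1 \<longleftrightarrow> int n dvd d"
proof
  assume n: "0 < n"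
  {
    assume "int n dvd d"
    then obtain j where "d = int n * j" by (auto simp: dvd_def)
    then show "zeta n (of_int d) = 1" using zeta_int_mult[OF n, of j] by simp
  }
  assume z: "zeta n (of_int d) = 1"
  have e: "2 * of_real pi * \<i> * complex_of_real (of_int d) / of_nat n = \<i> * complex_of_real (2 * pi * of_int d / real n)"
    by simp
  obtain j::int where j: "2 * pi * of_int d / real n = of_int (2 * j) * pi"
    using z unfolding zeta_def e exp_eq_1 by auto
  then have "real_of_int d = real n * of_int j" using n pi_gt_zero by (simp add: field_simps)
  then have "d = int n * j" by (metis of_int_eq_iff of_int_mult of_int_of_nat_eq)
  then show "int n dvd d" by simp
qed

lemma sum_Xs: "(\<Sum>x\<in>Xs n. f x) = (\<Sum>i<n. f (int i + 1))"
proof -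
  have "Xs n = (\<lambda>i. int i + 1) ` {..<n}"
  proof
    show "(\<lambda>i. int i + 1) ` {..<n} \<subseteq> Xs n" by (auto simp: Xs_def)
    show "Xs n \<subseteq> (\<lambda>i. int i + 1) ` {..<n}"
    proof
      fix x assume "x \<in> Xs n"
      then have "x = int (nat (x - 1)) + 1" "nat (x - 1) < n" by (auto simp: Xs_def)
      then show "x \<in> (\<lambda>i. int i + 1) ` {..<n}" by blast
    qed
  qed
  moreover have "inj_on (\<lambda>i. int i + 1) {..<n}" by (auto simp: inj_on_def)
  ultimately show ?thesis by (simp add: sum.reindex)
qed

lemma roots_sum:
  assumes "0 < n"
  shows "(\<Sum>x\<in>Xs n. zeta n (of_int (d * x))) = (if int n dvd d then of_nat n else 0)"
proof -
  define w where "w = zeta n (of_int d)"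
  have pw: "zeta n (of_int (d * x)) = w ^ nat x" if "0 \<le> x" for x
    using that by (simp add: w_def zeta_pow mult.commute)
  have "(\<Sum>x\<in>Xs n. zeta n (of_int (d * x))) = (\<Sum>i<n. w ^ Suc i)"
    unfolding sum_Xs by (intro sum.cong refl) (subst pw, simp_all add: nat_add_distrib)
  also have "\<dots> = w * (\<Sum>i<n. w ^ i)" by (simp add: sum_distrib_left)
  finally have s: "(\<Sum>x\<in>Xs n. zeta n (of_int (d * x))) = w * (\<Sum>i<n. w ^ i)" .
  show ?thesis
  proof (cases "int n dvd d")
    case True
    then have "w = 1" using zeta_eq_1_iff[OF assms] by (simp add: w_def)
    then show ?thesis using s True by simp
  next
    case False
    then have w1: "w \<noteq> 1" using zeta_eq_1_iff[OF assms] by (simp add: w_def)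
    have "w ^ n = zeta n (of_int (int n * d))" by (simp add: w_def zeta_pow)
    then have "w ^ n = 1" using zeta_int_mult[OF assms] by simp
    then have "(\<Sum>i<n. w ^ i) = 0" using w1 by (simp add: geometric_sum)
    then show ?thesis using s False by simp
  qed
qed


lemma Xs_negn_sum:
  assumes "a \<in> Xs n"
  shows "(\<Sum>x\<in>Xs n. zC n a x * g x) = g (negn n a)"
proof -
  have "(\<Sum>x\<in>Xs n. zC n a x * g x) = (\<Sum>x\<in>Xs n. if x = negn n a then g x else 0)"
    by (intro sum.cong refl) (use assms zC_iff in \<open>auto simp: zC_def\<close>)
  also have "\<dots> = g (negn n a)" using negn_Xs[OF assms] by (simp add: sum.delta')
  finally show ?thesis .
qed

lemma zC_sym: "zC n a b = zC n b a" by (simp add: zC_def add.commute)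

lemma Xs_negn_sum2:
  assumes "b \<in> Xs n"
  shows "(\<Sum>x\<in>Xs n. g x * zC n x b) = g (negn n b)"
  using Xs_negn_sum[OF assms, of g] by (simp add: zC_sym mult.commute)

lemma sqrt_sq_c: "0 < n \<Longrightarrow> of_real (sqrt (real n)) * of_real (sqrt (real n)) = (of_nat n :: complex)"
  by (simp flip: of_real_mult)

lemma kc_F_Fs: assumes "0 < n" "a \<in> Xs n" "b \<in> Xs n"
  shows "kc n (zF n) (zFs n) a b = diagk (\<lambda>_. 1) a b"
proof -
  have "kc n (zF n) (zFs n) a b = (\<Sum>x\<in>Xs n. zeta n (of_int ((a - b) * x))) / of_nat n"
    unfolding kc_def zF_def zFs_def sum_divide_distrib
    by (intro sum.cong refl) (simp add: zeta_add[symmetric] sqrt_sq_c[OF assms(1)] algebra_simps)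
  also have "\<dots> = (if int n dvd (a - b) then 1 else 0)" using assms(1) roots_sum[OF assms(1), of "a - b"] by simp
  also have "\<dots> = diagk (\<lambda>_. 1) a b"
  proof -
    have "int n dvd (a - b) \<longleftrightarrow> a = b"
    proof
      assume d: "int n dvd (a - b)"
      have bd: "\<bar>a - b\<bar> < int n" using assms by (auto simp: Xs_def)
      from d obtain j where j: "a - b = int n * j" by (auto simp: dvd_def)
      have "j = 0"
      proof (rule ccontr)
        assume "j \<noteq> 0"
        then have "int n * 1 \<le> int n * \<bar>j\<bar>" by (intro mult_left_mono) auto
        then have "int n \<le> \<bar>a - b\<bar>" unfolding j by (simp add: abs_mult)
        then show False using bd by simp
      qed
      then show "a = b" using j by simp
    qed simp
    then show ?thesis by (simp add: diagk_def)
  qed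
  finally show ?thesis .
qed


lemma Xs_dvd_eq: assumes "a \<in> Xs n" "b \<in> Xs n" shows "int n dvd (a - b) \<longleftrightarrow> a = b"
proof
  assume d: "int n dvd (a - b)"
  have bd: "\<bar>a - b\<bar> < int n" using assms by (auto simp: Xs_def)
  from d obtain j where j: "a - b = int n * j" by (auto simp: dvd_def)
  have "j = 0"
  proof (rule ccontr)
    assume "j \<noteq> 0"
    then have "int n * 1 \<le> int n * \<bar>j\<bar>" by (intro mult_left_mono) auto
    then have "int n \<le> \<bar>a - b\<bar>" unfolding j by (simp add: abs_mult)
    then show False using bd by simp
  qed
  then show "a = b" using j by simp
qed simp

lemma kc_Fs_F: assumes "0 < n" "a \<in> Xs n" "b \<in> Xs n"
  shows "kc n (zFs n) (zF n) a b = diagk (\<lambda>_. 1) a b"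
proof -
  have "kc n (zFs n) (zF n) a b = (\<Sum>x\<in>Xs n. zeta n (of_int ((b - a) * x))) / of_nat n"
    unfolding kc_def zF_def zFs_def sum_divide_distrib
    by (intro sum.cong refl) (simp add: zeta_add[symmetric] sqrt_sq_c[OF assms(1)] algebra_simps)
  also have "\<dots> = (if int n dvd (b - a) then 1 else 0)" using assms(1) roots_sum[OF assms(1), of "b - a"] by simp
  also have "\<dots> = diagk (\<lambda>_. 1) a b" using Xs_dvd_eq[OF assms(3,2)] by (auto simp: diagk_def)
  finally show ?thesis .
qed

lemma kc_F_F: assumes "0 < n" "a \<in> Xs n" "b \<in> Xs n"
  shows "kc n (zF n) (zF n) a b = zC n a b"
proof -
  have "kc n (zF n) (zF n) a b = (\<Sum>x\<in>Xs n. zeta n (of_int ((a + b) * x))) / of_nat n"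
    unfolding kc_def zF_def sum_divide_distrib
    by (intro sum.cong refl) (simp add: zeta_add[symmetric] sqrt_sq_c[OF assms(1)] algebra_simps)
  also have "\<dots> = (if int n dvd (a + b) then 1 else 0)" using assms(1) roots_sum[OF assms(1), of "a + b"] by simp
  also have "\<dots> = zC n a b" by (simp add: zC_def dvd_eq_mod_eq_0)
  finally show ?thesis .
qed

lemma kc_C_C: assumes "a \<in> Xs n" "b \<in> Xs n"
  shows "kc n (zC n) (zC n) a b = diagk (\<lambda>_. 1) a b"
proof -
  have "kc n (zC n) (zC n) a b = zC n (negn n a) b" unfolding kc_def by (rule Xs_negn_sum[OF assms(1)])
  also have "\<dots> = (if b = negn n (negn n a) then 1 else 0)"
    using zC_iff[OF negn_Xs[OF assms(1)] assms(2)] by (simp add: zC_def)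
  also have "\<dots> = diagk (\<lambda>_. 1) a b" using negn_negn[OF assms(1)] by (auto simp: diagk_def)
  finally show ?thesis .
qed

lemma zF_negn: assumes "0 < n" "a \<in> Xs n" shows "zF n (negn n a) b = zFs n a b"
proof -
  have "zeta n (of_int (negn n a * b)) = zeta n (- of_int (a * b))"
  proof -
    obtain j where e: "real_of_int (negn n a * b) = - real_of_int (a * b) + real n * real_of_int j"
    proof (cases "a = int n")
      case True
      have "real_of_int (negn n a * b) = - real_of_int (a * b) + real n * real_of_int (2 * b)"
        using True by (simp add: negn_def algebra_simps)
      then show ?thesis using that by blast
    next
      case False
      have "real_of_int (negn n a * b) = - real_of_int (a * b) + real n * real_of_int b"
        using False by (simp add: negn_def algebra_simps)
      then show ?thesis using that by blast
    qed
    have "zeta n (of_int (negn n a * b)) = zeta n (- real_of_int (a * b) + real n * real_of_int j)"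
      by (simp only: e)
    also have "\<dots> = zeta n (- of_int (a * b))" by (rule zeta_per[OF assms(1)])
    finally show ?thesis .
  qed
  then show ?thesis by (simp add: zF_def zFs_def)
qed

lemma zF_sym: "zF n a b = zF n b a" by (simp add: zF_def mult.commute)
lemma zFs_sym: "zFs n a b = zFs n b a" by (simp add: zFs_def mult.commute)

lemma kc_C_F: assumes "0 < n" "a \<in> Xs n" "b \<in> Xs n"
  shows "kc n (zC n) (zF n) a b = zFs n a b"
  unfolding kc_def Xs_negn_sum[OF assms(2)] using zF_negn[OF assms(1,2)] .

lemma kc_F_C: assumes "0 < n" "a \<in> Xs n" "b \<in> Xs n"
  shows "kc n (zF n) (zC n) a b = zFs n a b"
  unfolding kc_def Xs_negn_sum2[OF assms(3)] using zF_negn[OF assms(1,3), of a] by (simp add: zF_sym zFs_sym)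

lemma ztau_negn: assumes "a \<in> Xs n" shows "ztau n (negn n a) = ztau n a"
  using assms by (auto simp: ztau_def negn_def Xs_def algebra_simps)

lemma kc_C_T_C: assumes "a \<in> Xs n" "b \<in> Xs n"
  shows "kc n (zC n) (kc n (diagk (ztau n)) (zC n)) a b = diagk (ztau n) a b"
proof -
  have inner: "kc n (diagk (ztau n)) (zC n) x b = ztau n x * zC n x b" if "x \<in> Xs n" for x
  proof -
    have "kc n (diagk (ztau n)) (zC n) x b = (\<Sum>y\<in>Xs n. if x = y then ztau n x * zC n y b else 0)"
      unfolding kc_def diagk_def by (intro sum.cong) auto
    also have "\<dots> = ztau n x * zC n x b" using that by (simp add: sum.delta)
    finally show ?thesis .
  qed
  have "kc n (zC n) (kc n (diagk (ztau n)) (zC n)) a b = (\<Sum>x\<in>Xs n. zC n a x * (ztau n x * zC n x b))"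
    unfolding kc_def[of n "zC n"] by (intro sum.cong refl) (simp add: inner)
  also have "\<dots> = ztau n (negn n a) * zC n (negn n a) b" by (rule Xs_negn_sum[OF assms(1)])
  also have "\<dots> = diagk (ztau n) a b"
    using zC_iff[OF negn_Xs[OF assms(1)] assms(2)] negn_negn[OF assms(1)] ztau_negn[OF assms(1)]
    by (auto simp: zC_def diagk_def)
  finally show ?thesis .
qed


definition hq :: "nat \<Rightarrow> int \<Rightarrow> complex" where
  "hq n y = zeta n (of_int (y * (int n - y)) / 2)"

lemma even_t: "even (t * (1 - t :: int))"
proof (cases "even t")
  case True then show ?thesis by simp
next
  case False then have "even (1 - t)" by presburger
  then show ?thesis by simp
qed

lemma hq_per: assumes "0 < n" shows "hq n (r + int n * t) = hq n r"
proof -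
  from even_t[of t] obtain e where e: "t * (1 - t) = 2 * e" by (rule evenE)
  have "(r + int n * t) * (int n - (r + int n * t)) = r * (int n - r) + int n * int n * (t * (1 - t)) - 2 * int n * r * t"
    by algebra
  then have "(r + int n * t) * (int n - (r + int n * t)) = r * (int n - r) + 2 * (int n * (int n * e - r * t))"
    unfolding e by algebra
  note ie = this
  have "real_of_int ((r + int n * t) * (int n - (r + int n * t))) / 2 = real_of_int (r * (int n - r)) / 2 + real n * real_of_int (int n * e - r * t)"
    unfolding ie by (simp add: of_int_add of_int_mult)
  then have "hq n (r + int n * t) = zeta n (real_of_int (r * (int n - r)) / 2 + real n * real_of_int (int n * e - r * t))"
    unfolding hq_def by (simp only:)
  also have "\<dots> = hq n r" unfolding hq_def by (rule zeta_per[OF assms])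
  finally show ?thesis .
qed

lemma hq_mod: assumes "0 < n" shows "hq n y = hq n (y mod int n)"
  using hq_per[OF assms, of "y mod int n" "y div int n"] by simp

lemma card_Xs: "card (Xs n) = n" by (simp add: Xs_def)

lemma hq_shift:
  assumes "0 < n"
  shows "(\<Sum>x\<in>Xs n. hq n (x - d)) = (\<Sum>c<n. hq n (int c))"
proof -
  define f where "f x = (x - d) mod int n" for x
  have inj: "inj_on f (Xs n)"
  proof (rule inj_onI)
    fix x y assume xy: "x \<in> Xs n" "y \<in> Xs n" "f x = f y"
    then have "(x - d) mod int n = (y - d) mod int n" by (simp add: f_def)
    then have "int n dvd ((x - d) - (y - d))" by (simp add: mod_eq_dvd_iff)
    then have "int n dvd (x - y)" by simp
    then show "x = y" using Xs_dvd_eq[OF xy(1,2)] by simp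
  qed
  have sub: "f ` Xs n \<subseteq> {0..<int n}" using assms by (auto simp: f_def)
  have img: "f ` Xs n = {0..<int n}"
    by (rule card_subset_eq[OF _ sub]) (use card_image[OF inj] card_Xs in auto)
  have "(\<Sum>x\<in>Xs n. hq n (x - d)) = (\<Sum>x\<in>Xs n. hq n (f x))"
    unfolding f_def by (rule sum.cong[OF refl], rule hq_mod[OF assms])
  also have "\<dots> = (\<Sum>c\<in>f ` Xs n. hq n c)" by (simp add: sum.reindex[OF inj])
  also have "\<dots> = (\<Sum>c\<in>int ` {..<n}. hq n c)" unfolding img by (simp add: image_int_atLeastLessThan lessThan_atLeast0)
  also have "\<dots> = (\<Sum>c<n. hq n (int c))" by (simp add: sum.reindex)
  finally show ?thesis .
qed

lemma gphi_hq: "0 < n \<Longrightarrow> gphi n (of_nat c) = hq n (int c)"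
  unfolding gphi_def hq_def zeta_def by (rule arg_cong[where f=exp]) (simp add: field_simps)

lemma gauss_hq: "0 < n \<Longrightarrow> (\<Sum>c<n. hq n (int c)) = of_real (sqrt n) * zeta n (real n * (real n - 1) / 8)"
proof -
  assume n: "0 < n"
  have "(\<Sum>c<n. hq n (int c)) = (\<Sum>c<n. gphi n (of_nat c))" using gphi_hq[OF n] by simp
  also have "\<dots> = of_real (sqrt n) * exp (of_real pi * \<i> * (of_nat n - 1) / 4)" by (rule gauss_sum[OF n])
  also have "exp (of_real pi * \<i> * (of_nat n - 1) / 4) = zeta n (real n * (real n - 1) / 8)"
    unfolding zeta_def using n by (intro arg_cong[where f=exp]) (simp add: field_simps)
  finally show ?thesis .
qed


lemma M_gauss:
  assumes n: "0 < n" and ab: "a \<in> Xs n" "b \<in> Xs n"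
  shows "(\<Sum>x\<in>Xs n. zF n a x * ztau n x * zF n x b) * ztau n a * ztau n b = zF n a b"
proof -
  define d where "d = a + b"
  define t0 where "t0 = - (real n * (real n - 1) / 24)"
  define D where "D = real_of_int (d * (int n + d)) / 2"
  define E8 where "E8 = real n * (real n - 1) / 8"
  define sn where "sn = (of_real (sqrt (real n)) :: complex)"
  have sn2: "sn * sn = of_nat n" unfolding sn_def using sqrt_sq_c[OF n] .
  have sn0: "sn \<noteq> 0" using n by (simp add: sn_def)
  have trm: "zF n a x * ztau n x * zF n x b = zeta n (t0 + D) / of_nat n * hq n (x - d)" for x
  proof -
    have ex: "real_of_int (a * x) + real_of_int (x * (int n - x)) / 2 + real_of_int (x * b)
        = real_of_int ((x - d) * (int n - (x - d))) / 2 + D"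
      unfolding D_def d_def by (simp add: field_simps)
    have "zF n a x * ztau n x * zF n x b = zeta n t0 * (zeta n (real_of_int (a * x)) * zeta n (real_of_int (x * (int n - x)) / 2) * zeta n (real_of_int (x * b))) / (sn * sn)"
      by (simp add: zF_def ztau_def sn_def t0_def)
    also have "\<dots> = zeta n t0 * zeta n (real_of_int ((x - d) * (int n - (x - d))) / 2 + D) / of_nat n"
      unfolding sn2 zeta_add[symmetric] ex ..
    also have "\<dots> = zeta n (t0 + D) / of_nat n * hq n (x - d)"
      by (simp add: zeta_add hq_def)
    finally show ?thesis .
  qed
  have "(\<Sum>x\<in>Xs n. zF n a x * ztau n x * zF n x b) = zeta n (t0 + D) / of_nat n * (\<Sum>x\<in>Xs n. hq n (x - d))"
    by (simp add: trm sum_distrib_left)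
  also have "\<dots> = zeta n (t0 + D) / of_nat n * (sn * zeta n E8)"
    unfolding hq_shift[OF n] gauss_hq[OF n] sn_def E8_def ..
  finally have S: "(\<Sum>x\<in>Xs n. zF n a x * ztau n x * zF n x b) = zeta n (t0 + D) / of_nat n * (sn * zeta n E8)" .
  have ta: "ztau n a = zeta n (t0 + real_of_int (a * (int n - a)) / 2)" by (simp only: ztau_def t0_def zeta_add)
  have tb: "ztau n b = zeta n (t0 + real_of_int (b * (int n - b)) / 2)" by (simp only: ztau_def t0_def zeta_add)
  have "(\<Sum>x\<in>Xs n. zF n a x * ztau n x * zF n x b) * ztau n a * ztau n b
      = (sn / of_nat n) * zeta n ((t0 + D) + E8 + (t0 + real_of_int (a * (int n - a)) / 2) + (t0 + real_of_int (b * (int n - b)) / 2))"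
    unfolding S ta tb zeta_add by (simp add: algebra_simps)
  also have "(t0 + D) + E8 + (t0 + real_of_int (a * (int n - a)) / 2) + (t0 + real_of_int (b * (int n - b)) / 2)
      = real_of_int (a * b) + real n * real_of_int d"
    unfolding t0_def D_def E8_def d_def by (simp add: field_simps)
  also have "zeta n (real_of_int (a * b) + real n * real_of_int d) = zeta n (real_of_int (a * b))"
    by (rule zeta_per[OF n])
  also have "sn / of_nat n = 1 / sn" using sn2 sn0 n by (simp add: field_simps)
  finally show ?thesis by (simp add: zF_def sn_def)
qed


lemma G_gauss:
  assumes n: "0 < n" and ab: "a \<in> Xs n" "b \<in> Xs n"
  shows "kc n (kc n (zF n) (diagk (ztau n))) (kc n (kc n (zF n) (diagk (ztau n))) (kc n (zF n) (diagk (ztau n)))) a b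
       = kc n (zF n) (zF n) a b"
proof -
  define G where "G = kc n (zF n) (diagk (ztau n))"
  have tnz: "ztau n x \<noteq> 0" for x by (simp add: ztau_def zeta_def)
  have G: "G x y = zF n x y * ztau n y" if "y \<in> Xs n" for x y
  proof -
    have "G x y = (\<Sum>z\<in>Xs n. if z = y then zF n x y * ztau n y else 0)"
      unfolding G_def kc_def diagk_def by (intro sum.cong) auto
    also have "\<dots> = zF n x y * ztau n y" using that by (simp add: sum.delta')
    finally show ?thesis .
  qed
  have GG: "kc n G G x y = zF n x y / ztau n x" if "x \<in> Xs n" "y \<in> Xs n" for x y
  proof -
    have "kc n G G x y = (\<Sum>z\<in>Xs n. zF n x z * ztau n z * zF n z y) * ztau n y"
      unfolding kc_def sum_distrib_right using that by (intro sum.cong refl) (simp add: G)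
    also have "\<dots> = zF n x y / ztau n x"
      using M_gauss[OF n that] tnz[of x] tnz[of y] by (simp add: field_simps)
    finally show ?thesis .
  qed
  have "kc n G (kc n G G) a b = (\<Sum>x\<in>Xs n. zF n a x * ztau n x * (zF n x b / ztau n x))"
    unfolding kc_def[of n G "kc n G G"] using ab by (intro sum.cong refl) (simp add: G GG)
  also have "\<dots> = kc n (zF n) (zF n) a b"
    unfolding kc_def using tnz by (intro sum.cong refl) simp
  finally show ?thesis unfolding G_def .
qed

lemma symm_cong:
  assumes "l \<in> Akn k n" "m \<in> Akn k n" "\<And>a b. a \<in> Xs n \<Longrightarrow> b \<in> Xs n \<Longrightarrow> f a b = g a b"
  shows "symm f l m = symm g l m"
proof -
  have ll: "set l \<subseteq> Xs n" "set m \<subseteq> Xs n" using assms by (auto simp: Akn_iff)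
  have "Kt f \<alpha> \<beta> = Kt g \<alpha> \<beta>" if "\<alpha> \<in> Pm l" "\<beta> \<in> Pm m" for \<alpha> \<beta>
  proof -
    have "set \<alpha> \<subseteq> Xs n" "set \<beta> \<subseteq> Xs n" "length \<alpha> = length \<beta>"
      using that ll Pm_set Pm_length assms(1,2) by (auto simp: Akn_length)
    then have "\<forall>j<length \<alpha>. \<alpha>!j \<in> Xs n \<and> \<beta>!j \<in> Xs n" by (metis nth_mem subsetD)
    then show ?thesis unfolding Kt_def by (intro prod.cong refl assms(3)) auto
  qed
  then show ?thesis unfolding symm_def by (intro arg_cong[where f="\<lambda>x. _ * x"] sum.cong refl) auto
qed

lemma mmult_symm:
  assumes "\<forall>l\<in>Akn k n. \<forall>m\<in>Akn k n. M l m = symm f l m" "\<forall>l\<in>Akn k n. \<forall>m\<in>Akn k n. N l m = symm g l m"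
  shows "\<forall>l\<in>Akn k n. \<forall>m\<in>Akn k n. mmult (Akn k n) M N l m = symm (kc n f g) l m"
proof (intro ballI)
  fix l m assume lm: "l \<in> Akn k n" "m \<in> Akn k n"
  have "mmult (Akn k n) M N l m = (\<Sum>\<nu>\<in>Akn k n. symm f l \<nu> * symm g \<nu> m)"
    unfolding mmult_def using assms lm by (intro sum.cong refl) auto
  also have "\<dots> = symm (kc n f g) l m" by (rule symm_mult[OF lm])
  finally show "mmult (Akn k n) M N l m = symm (kc n f g) l m" .
qed

theorem mainTheorem4:
  fixes k n :: nat
  assumes "k \<ge> 1" and "n \<ge> 1"
  defines "A \<equiv> Akn k n"
  defines "S \<equiv> Smat k n" and "T \<equiv> Tmat k n" and "C \<equiv> Cmat n"
  defines "ST \<equiv> mmult A S T"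
  shows "meq A (mmult A ST (mmult A ST ST)) (mmult A S S)
       \<and> meq A (mmult A S S) C
       \<and> meq A (mmult A C C) Idmat
       \<and> meq A (mmult A S (ctrans S)) Idmat
       \<and> meq A (mmult A (ctrans S) S) Idmat
       \<and> meq A (ctrans S) (mmult A C S)
       \<and> meq A (ctrans S) (mmult A S C)
       \<and> meq A (mmult A C (mmult A T C)) T"
proof -
  have n: "0 < n" using assms(2) by simp
  let ?G = "kc n (zF n) (diagk (ztau n))"
  have hS: "\<forall>l\<in>A. \<forall>m\<in>A. S l m = symm (zF n) l m" using Smat_symm n by (auto simp: S_def A_def)
  have hT: "\<forall>l\<in>A. \<forall>m\<in>A. T l m = symm (diagk (ztau n)) l m" using Tmat_symm by (auto simp: T_def A_def)
  have hC: "\<forall>l\<in>A. \<forall>m\<in>A. C l m = symm (zC n) l m" using Cmat_symm by (auto simp: C_def A_def)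
  have hI: "\<forall>l\<in>A. \<forall>m\<in>A. Idmat l m = symm (diagk (\<lambda>_. 1)) l m" using Idmat_symm by (auto simp: A_def)
  have hSs: "\<forall>l\<in>A. \<forall>m\<in>A. ctrans S l m = symm (zFs n) l m" using ctrans_Smat n by (auto simp: S_def A_def)
  have cong: "\<forall>l\<in>A. \<forall>m\<in>A. symm f l m = symm g l m" if "\<And>a b. a \<in> Xs n \<Longrightarrow> b \<in> Xs n \<Longrightarrow> f a b = g a b" for f g
    using symm_cong[of _ k n _ f g] that by (auto simp: A_def)
  have mm: "\<forall>l\<in>A. \<forall>m\<in>A. mmult A M N l m = symm (kc n f g) l m"
    if "\<forall>l\<in>A. \<forall>m\<in>A. M l m = symm f l m" "\<forall>l\<in>A. \<forall>m\<in>A. N l m = symm g l m" for M N f g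
    using mmult_symm[of k n M f N g] that by (simp add: A_def)
  have hST: "\<forall>l\<in>A. \<forall>m\<in>A. ST l m = symm ?G l m" unfolding ST_def by (rule mm[OF hS hT])
  have e1: "meq A (mmult A ST (mmult A ST ST)) (mmult A S S)"
  proof -
    have L: "\<forall>l\<in>A. \<forall>m\<in>A. mmult A ST (mmult A ST ST) l m = symm (kc n ?G (kc n ?G ?G)) l m"
      by (rule mm[OF hST mm[OF hST hST]])
    have R: "\<forall>l\<in>A. \<forall>m\<in>A. mmult A S S l m = symm (kc n (zF n) (zF n)) l m" by (rule mm[OF hS hS])
    have E: "\<forall>l\<in>A. \<forall>m\<in>A. symm (kc n ?G (kc n ?G ?G)) l m = symm (kc n (zF n) (zF n)) l m"
      by (rule cong) (rule G_gauss[OF n])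
    show ?thesis unfolding meq_def using L R E by simp
  qed
  have e2: "meq A (mmult A S S) C"
  proof -
    have R: "\<forall>l\<in>A. \<forall>m\<in>A. mmult A S S l m = symm (kc n (zF n) (zF n)) l m" by (rule mm[OF hS hS])
    have E: "\<forall>l\<in>A. \<forall>m\<in>A. symm (kc n (zF n) (zF n)) l m = symm (zC n) l m"
      by (rule cong) (rule kc_F_F[OF n])
    show ?thesis unfolding meq_def using R E hC by simp
  qed
  have e3: "meq A (mmult A C C) Idmat"
  proof -
    have R: "\<forall>l\<in>A. \<forall>m\<in>A. mmult A C C l m = symm (kc n (zC n) (zC n)) l m" by (rule mm[OF hC hC])
    have E: "\<forall>l\<in>A. \<forall>m\<in>A. symm (kc n (zC n) (zC n)) l m = symm (diagk (\<lambda>_. 1)) l m"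
      by (rule cong) (rule kc_C_C)
    show ?thesis unfolding meq_def using R E hI by simp
  qed
  have e4: "meq A (mmult A S (ctrans S)) Idmat"
  proof -
    have R: "\<forall>l\<in>A. \<forall>m\<in>A. mmult A S (ctrans S) l m = symm (kc n (zF n) (zFs n)) l m" by (rule mm[OF hS hSs])
    have E: "\<forall>l\<in>A. \<forall>m\<in>A. symm (kc n (zF n) (zFs n)) l m = symm (diagk (\<lambda>_. 1)) l m"
      by (rule cong) (rule kc_F_Fs[OF n])
    show ?thesis unfolding meq_def using R E hI by simp
  qed
  have e5: "meq A (mmult A (ctrans S) S) Idmat"
  proof -
    have R: "\<forall>l\<in>A. \<forall>m\<in>A. mmult A (ctrans S) S l m = symm (kc n (zFs n) (zF n)) l m" by (rule mm[OF hSs hS])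
    have E: "\<forall>l\<in>A. \<forall>m\<in>A. symm (kc n (zFs n) (zF n)) l m = symm (diagk (\<lambda>_. 1)) l m"
      by (rule cong) (rule kc_Fs_F[OF n])
    show ?thesis unfolding meq_def using R E hI by simp
  qed
  have e6: "meq A (ctrans S) (mmult A C S)"
  proof -
    have R: "\<forall>l\<in>A. \<forall>m\<in>A. mmult A C S l m = symm (kc n (zC n) (zF n)) l m" by (rule mm[OF hC hS])
    have E: "\<forall>l\<in>A. \<forall>m\<in>A. symm (kc n (zC n) (zF n)) l m = symm (zFs n) l m"
      by (rule cong) (rule kc_C_F[OF n])
    show ?thesis unfolding meq_def using R E hSs by simp
  qed
  have e7: "meq A (ctrans S) (mmult A S C)"
  proof -
    have R: "\<forall>l\<in>A. \<forall>m\<in>A. mmult A S C l m = symm (kc n (zF n) (zC n)) l m" by (rule mm[OF hS hC])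
    have E: "\<forall>l\<in>A. \<forall>m\<in>A. symm (kc n (zF n) (zC n)) l m = symm (zFs n) l m"
      by (rule cong) (rule kc_F_C[OF n])
    show ?thesis unfolding meq_def using R E hSs by simp
  qed
  have e8: "meq A (mmult A C (mmult A T C)) T"
  proof -
    have R: "\<forall>l\<in>A. \<forall>m\<in>A. mmult A C (mmult A T C) l m = symm (kc n (zC n) (kc n (diagk (ztau n)) (zC n))) l m"
      by (rule mm[OF hC mm[OF hT hC]])
    have E: "\<forall>l\<in>A. \<forall>m\<in>A. symm (kc n (zC n) (kc n (diagk (ztau n)) (zC n))) l m = symm (diagk (ztau n)) l m"
      by (rule cong) (rule kc_C_T_C)
    show ?thesis unfolding meq_def using R E hT by simp
  qed
  show ?thesis using e1 e2 e3 e4 e5 e6 e7 e8 by blast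
qed


end
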